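(* Let $p\in[1,\infty]$, let $(X,d,\mu)$ be a metric measure space which is $p$-thick quasiconvex with some constant $C\ge1$, and let $d_p$ be the associated metric on $X$. Let $(Y,d_Y,\mu_Y)$ be a $p$-thick geodesic metric measure space and $f:Y\to X$ a volume preserving $1$-Lipschitz map. Then $f:Y\to(X,d_p)$ is volume preserving and $1$-Lipschitz.
   Context: A metric measure space is a proper metric space with a Borel regular outer measure positive and finite on balls. $\operatorname{Mod}_p\Gamma=\inf\int\rho^pd\mu$ (for $p<\infty$), $\operatorname{Mod}_\infty\Gamma=\inf\|\rho\|_{L^\infty}$, over Borel $\rho\ge0$ with $\int_\gamma\rho\ge1$ on $\Gamma$. $\Gamma(E,F;C)$ is the family of curves $\gamma:[0,1]\to X$ with $\gamma(0)\in E,\gamma(1)\in F,\ell(\gamma)\le Cd(\gamma(0),\gamma(1))$. $X$ is $p$-thick quasiconvex with constant $C$ if $\operatorname{Mod}_p\Gamma(E,F;C)>0$ for all measurable $E,F$ of positive measure, and $p$-thick geodesic if this holds for every $C>1$. Volume preserving means $f_*\mu_Y=\mu$. The metric $d_p$: with $\overline\Gamma(X)$ the Lipschitz curves $[0,1]\to X$ and $\Gamma(E,F)$ those from $E$ to $F$, set $ess\ell_p(\Gamma):=\sup_{\operatorname{Mod}_p\Gamma_0=0}\inf\{\ell(\gamma):\gamma\in\Gamma\setminus\Gamma_0\}$ ($\inf\emptyset=\infty$), $d_p'(x,y):=\lim_{\delta\to0}ess\ell_p\Gamma(\bar B(x,\delta),\bar B(y,\delta))$ and $d_p(x,y):=\inf\{\sum_{i=1}^nd_p'(x_{i-1},x_i):x_0=x,x_n=y\}$.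 *)

theory Defs
  imports "HOL-Analysis.Analysis" "HOL-Probability.Essential_Supremum"
begin

text \<open>A metric measure space: the metric is the one of the type class, mu is the measure
  given by a Borel regular outer measure restricted to its (Caratheodory) measurable sets,
  i.e. a complete measure containing the Borel sets, Borel regular; X proper; mu positive and
  finite on (open, nondegenerate) balls.\<close>

definition mms :: "('a::metric_space) measure \<Rightarrow> bool" where
  "mms M \<longleftrightarrow>
     space M = UNIV \<and>
     sets (borel :: 'a measure) \<subseteq> sets M \<and>
     (\<forall>A\<in>sets M. emeasure M A = 0 \<longrightarrow> (\<forall>B. B \<subseteq> A \<longrightarrow> B \<in> sets M)) \<and>
     (\<forall>A\<in>sets M. \<exists>B\<in>sets (borel :: 'a measure). A \<subseteq> B \<and> emeasure M B = emeasure M A) \<and>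
     (\<forall>(x::'a) r. compact (cball x r)) \<and>
     (\<forall>x r. r > 0 \<longrightarrow> 0 < emeasure M (ball x r) \<and> emeasure M (ball x r) < \<infinity>)"

text \<open>Curves are maps gamma :: real => 'a, considered on [0,1].\<close>

definition curve_length :: "(real \<Rightarrow> 'a::metric_space) \<Rightarrow> real \<Rightarrow> real \<Rightarrow> ennreal" where
  "curve_length \<gamma> a b =
     (SUP (n, t) \<in> {(n::nat, t::nat \<Rightarrow> real). t 0 = a \<and> t n = b \<and> (\<forall>i<n. t i \<le> t (Suc i))}.
        (\<Sum>i<n. ennreal (dist (\<gamma> (t i)) (\<gamma> (t (Suc i))))))"

definition len :: "(real \<Rightarrow> 'a::metric_space) \<Rightarrow> ennreal" where
  "len \<gamma> = curve_length \<gamma> 0 1"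

definition arclength_param :: "(real \<Rightarrow> 'a::metric_space) \<Rightarrow> real \<Rightarrow> 'a" where
  "arclength_param \<gamma> s = \<gamma> (SOME t. t \<in> {0..1} \<and> curve_length \<gamma> 0 t = ennreal s)"

definition line_integral :: "('a::metric_space \<Rightarrow> ennreal) \<Rightarrow> (real \<Rightarrow> 'a) \<Rightarrow> ennreal" where
  "line_integral \<rho> \<gamma> =
     (\<integral>\<^sup>+ s \<in> {0..enn2real (len \<gamma>)}. \<rho> (arclength_param \<gamma> s) \<partial>lborel)"

definition enn_powr :: "ennreal \<Rightarrow> real \<Rightarrow> ennreal" where
  "enn_powr x q = (if x = \<infinity> then \<infinity> else ennreal (enn2real x powr q))"

definition admissible :: "(real \<Rightarrow> 'a::metric_space) set \<Rightarrow> ('a \<Rightarrow> ennreal) \<Rightarrow> bool" where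
  "admissible \<Gamma> \<rho> \<longleftrightarrow> \<rho> \<in> borel_measurable (borel :: 'a measure) \<and> (\<forall>\<gamma>\<in>\<Gamma>. line_integral \<rho> \<gamma> \<ge> 1)"

text \<open>p-modulus, p in [1, infinity] represented as an extended nonnegative real.\<close>
definition Mod :: "'a::metric_space measure \<Rightarrow> ennreal \<Rightarrow> (real \<Rightarrow> 'a) set \<Rightarrow> ennreal" where
  "Mod M p \<Gamma> =
     (if p = \<infinity> then (INF \<rho> \<in> {\<rho>. admissible \<Gamma> \<rho>}. esssup M \<rho>)
      else (INF \<rho> \<in> {\<rho>. admissible \<Gamma> \<rho>}. \<integral>\<^sup>+ x. enn_powr (\<rho> x) (enn2real p) \<partial>M))"

definition curves_qc :: "'a::metric_space set \<Rightarrow> 'a set \<Rightarrow> real \<Rightarrow> (real \<Rightarrow> 'a) set" where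
  "curves_qc E F C = {\<gamma>. continuous_on {0..1} \<gamma> \<and> \<gamma> 0 \<in> E \<and> \<gamma> 1 \<in> F \<and>
                          len \<gamma> \<le> ennreal (C * dist (\<gamma> 0) (\<gamma> 1))}"

definition thick_quasiconvex :: "'a::metric_space measure \<Rightarrow> ennreal \<Rightarrow> real \<Rightarrow> bool" where
  "thick_quasiconvex M p C \<longleftrightarrow>
     (\<forall>E F. E \<in> sets M \<longrightarrow> F \<in> sets M \<longrightarrow> emeasure M E > 0 \<longrightarrow> emeasure M F > 0 \<longrightarrow>
        Mod M p (curves_qc E F C) > 0)"

definition thick_geodesic :: "'a::metric_space measure \<Rightarrow> ennreal \<Rightarrow> bool" where
  "thick_geodesic M p \<longleftrightarrow> (\<forall>C>1. thick_quasiconvex M p C)"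

definition volume_preserving :: "'b measure \<Rightarrow> 'a measure \<Rightarrow> ('b \<Rightarrow> 'a) \<Rightarrow> bool" where
  "volume_preserving MY MX f \<longleftrightarrow>
     (\<forall>A\<in>sets MX. f -` A \<in> sets MY \<and> emeasure MY (f -` A) = emeasure MX A)"

definition lip_curves :: "(real \<Rightarrow> 'a::metric_space) set" where
  "lip_curves = {\<gamma>. \<exists>L. L-lipschitz_on {0..1} \<gamma>}"

definition curves_between :: "'a::metric_space set \<Rightarrow> 'a set \<Rightarrow> (real \<Rightarrow> 'a) set" where
  "curves_between E F = {\<gamma> \<in> lip_curves. \<gamma> 0 \<in> E \<and> \<gamma> 1 \<in> F}"

definition ess_length :: "'a::metric_space measure \<Rightarrow> ennreal \<Rightarrow> (real \<Rightarrow> 'a) set \<Rightarrow> ennreal" where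
  "ess_length M p \<Gamma> = (SUP \<Gamma>0 \<in> {\<Gamma>0. Mod M p \<Gamma>0 = 0}. INF \<gamma> \<in> \<Gamma> - \<Gamma>0. len \<gamma>)"

definition dp' :: "'a::metric_space measure \<Rightarrow> ennreal \<Rightarrow> 'a \<Rightarrow> 'a \<Rightarrow> ennreal" where
  "dp' M p x y = Lim (at_right (0::real))
      (\<lambda>\<delta>. ess_length M p (curves_between (cball x \<delta>) (cball y \<delta>)))"

definition dp :: "'a::metric_space measure \<Rightarrow> ennreal \<Rightarrow> 'a \<Rightarrow> 'a \<Rightarrow> ennreal" where
  "dp M p x y = (INF (n, xs) \<in> {(n::nat, xs::nat \<Rightarrow> 'a). n \<ge> 1 \<and> xs 0 = x \<and> xs n = y}.
                   (\<Sum>i\<in>{1..n}. dp' M p (xs (i - 1)) (xs i)))"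

definition dist_open :: "('a \<Rightarrow> 'a \<Rightarrow> ennreal) \<Rightarrow> 'a set \<Rightarrow> bool" where
  "dist_open D U \<longleftrightarrow> (\<forall>x\<in>U. \<exists>r>0. {y. D x y < ennreal r} \<subseteq> U)"

definition dist_borel_sets :: "('a \<Rightarrow> 'a \<Rightarrow> ennreal) \<Rightarrow> 'a set set" where
  "dist_borel_sets D = sigma_sets UNIV {U. dist_open D U}"

end

theory Submission
  imports Defs "HOL-Probability.Distribution_Functions"
begin


definition part :: "real \<Rightarrow> real \<Rightarrow> nat \<Rightarrow> (nat \<Rightarrow> real) \<Rightarrow> bool" where
  "part a b n t \<longleftrightarrow> t 0 = a \<and> t n = b \<and> (\<forall>i<n. t i \<le> t (Suc i))"

definition PS :: "(real \<Rightarrow> 'a::metric_space) \<Rightarrow> nat \<Rightarrow> (nat \<Rightarrow> real) \<Rightarrow> ennreal" where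
  "PS \<gamma> n t = (\<Sum>i<n. ennreal (dist (\<gamma> (t i)) (\<gamma> (t (Suc i)))))"

lemma cl_alt: "curve_length \<gamma> a b = (SUP (n,t) \<in> {(n,t). part a b n t}. PS \<gamma> n t)"
  by (simp add: curve_length_def part_def PS_def)

lemma cl_ge: "part a b n t \<Longrightarrow> PS \<gamma> n t \<le> curve_length \<gamma> a b"
  unfolding cl_alt by (rule SUP_upper2[where i="(n,t)"]) auto

lemma cl_le: "(\<And>n t. part a b n t \<Longrightarrow> PS \<gamma> n t \<le> c) \<Longrightarrow> curve_length \<gamma> a b \<le> c"
  unfolding cl_alt by (rule SUP_least) auto

lemma part_mono: "part a b n t \<Longrightarrow> i \<le> j \<Longrightarrow> j \<le> n \<Longrightarrow> t i \<le> t j"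
proof (induction j)
  case 0 then show ?case by simp
next
  case (Suc j)
  show ?case
  proof (cases "i = Suc j")
    case True then show ?thesis by simp
  next
    case False
    then have "t i \<le> t j" using Suc by simp
    also have "t j \<le> t (Suc j)" using Suc.prems unfolding part_def by auto
    finally show ?thesis .
  qed
qed

lemma part_range: "part a b n t \<Longrightarrow> i \<le> n \<Longrightarrow> a \<le> t i \<and> t i \<le> b"
  using part_mono[of a b n t 0 i] part_mono[of a b n t i n] unfolding part_def by auto

lemma part_le: "part a b n t \<Longrightarrow> a \<le> b"
  using part_range[of a b n t 0] by simp

lemma part_Suc: "part a b (Suc n) t \<Longrightarrow> part (t 1) b n (\<lambda>i. t (Suc i))"
  unfolding part_def by auto

lemma PS_Suc: "PS \<gamma> (Suc n) t = ennreal (dist (\<gamma> (t 0)) (\<gamma> (t 1))) + PS \<gamma> n (\<lambda>i. t (Suc i))"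
  by (simp only: PS_def sum.lessThan_Suc_shift One_nat_def)

lemma PS_Suc2: "PS \<gamma> (Suc n) t = PS \<gamma> n t + ennreal (dist (\<gamma> (t n)) (\<gamma> (t (Suc n))))"
  by (simp only: PS_def sum.lessThan_Suc)

lemma part_butlast: "part a b (Suc n) t \<Longrightarrow> part a (t n) n t"
  unfolding part_def by auto

lemma cl_empty: "b < a \<Longrightarrow> curve_length \<gamma> a b = 0"
  by (rule antisym[OF cl_le]) (auto dest: part_le)

lemma cl_refl: "curve_length \<gamma> a a = 0"
proof (rule antisym[OF cl_le])
  fix n t assume p: "part a a n t"
  have "\<forall>i\<le>n. t i = a" using part_range[OF p] by force
  then have "\<forall>i<n. dist (\<gamma> (t i)) (\<gamma> (t (Suc i))) = 0" by auto
  then show "PS \<gamma> n t \<le> 0" unfolding PS_def by simp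
qed simp

lemma cl_dist: "a \<le> b \<Longrightarrow> ennreal (dist (\<gamma> a) (\<gamma> b)) \<le> curve_length \<gamma> a b"
proof -
  assume ab: "a \<le> b"
  let ?t = "\<lambda>i::nat. if i = 0 then a else b"
  have "part a b 1 ?t" using ab unfolding part_def by auto
  then have "PS \<gamma> 1 ?t \<le> curve_length \<gamma> a b" by (rule cl_ge)
  then show ?thesis unfolding PS_def by simp
qed

lemma cl_prepend:
  assumes "a \<le> b" "b \<le> c"
  shows "ennreal (dist (\<gamma> a) (\<gamma> b)) + curve_length \<gamma> b c \<le> curve_length \<gamma> a c"
proof -
  have ne: "{(n,t). part b c n t} \<noteq> {}"
  proof -
    have "part b c 1 (\<lambda>i. if i = 0 then b else c)" using assms unfolding part_def by auto
    then show ?thesis by blast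
  qed
  have "ennreal (dist (\<gamma> a) (\<gamma> b)) + curve_length \<gamma> b c =
        (SUP x \<in> {(n,t). part b c n t}. ennreal (dist (\<gamma> a) (\<gamma> b)) + (case x of (n,t) \<Rightarrow> PS \<gamma> n t))"
    unfolding cl_alt by (subst ennreal_SUP_add_right[OF ne]) (simp add: split_beta)
  also have "\<dots> \<le> curve_length \<gamma> a c"
  proof (rule SUP_least, clarsimp)
    fix n t assume p: "part b c n t"
    let ?t = "\<lambda>i. case i of 0 \<Rightarrow> a | Suc j \<Rightarrow> t j"
    have p2: "part a c (Suc n) ?t" using p assms unfolding part_def by (auto split: nat.split)
    have "PS \<gamma> (Suc n) ?t = ennreal (dist (\<gamma> a) (\<gamma> b)) + PS \<gamma> n t"
      unfolding PS_Suc using p unfolding part_def by simp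
    then show "ennreal (dist (\<gamma> a) (\<gamma> b)) + PS \<gamma> n t \<le> curve_length \<gamma> a c"
      using cl_ge[OF p2, of \<gamma>] by simp
  qed
  finally show ?thesis .
qed

lemma cl_superadd:
  assumes "a \<le> b" "b \<le> c"
  shows "curve_length \<gamma> a b + curve_length \<gamma> b c \<le> curve_length \<gamma> a c"
proof -
  have key: "PS \<gamma> n t + curve_length \<gamma> b c \<le> curve_length \<gamma> a c" if "part a b n t" for n t
    using that
  proof (induction n arbitrary: a t)
    case 0
    then have "a = b" unfolding part_def by simp
    then show ?case unfolding PS_def by simp
  next
    case (Suc n)
    have p: "part (t 1) b n (\<lambda>i. t (Suc i))" by (rule part_Suc[OF Suc.prems])
    have a0: "t 0 = a" using Suc.prems unfolding part_def by simp
    have r: "a \<le> t 1" "t 1 \<le> b" using part_range[OF Suc.prems, of 1] a0 by auto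
    have "PS \<gamma> (Suc n) t + curve_length \<gamma> b c =
        ennreal (dist (\<gamma> a) (\<gamma> (t 1))) + (PS \<gamma> n (\<lambda>i. t (Suc i)) + curve_length \<gamma> b c)"
      unfolding PS_Suc a0 by (simp add: add.assoc)
    also have "\<dots> \<le> ennreal (dist (\<gamma> a) (\<gamma> (t 1))) + curve_length \<gamma> (t 1) c"
      using Suc.IH[OF p] by (simp add: add_left_mono)
    also have "\<dots> \<le> curve_length \<gamma> a c"
      using cl_prepend r assms by (meson order_trans)
    finally show ?case .
  qed
  have ne: "{(n,t). part a b n t} \<noteq> {}"
  proof -
    have "part a b 1 (\<lambda>i. if i = 0 then a else b)" using assms unfolding part_def by auto
    then show ?thesis by blast
  qed
  have "curve_length \<gamma> a b + curve_length \<gamma> b c =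
      (SUP x \<in> {(n,t). part a b n t}. (case x of (n,t) \<Rightarrow> PS \<gamma> n t) + curve_length \<gamma> b c)"
    unfolding cl_alt[of \<gamma> a b] by (subst ennreal_SUP_add_left[OF ne]) (simp add: split_beta)
  also have "\<dots> \<le> curve_length \<gamma> a c"
    by (rule SUP_least) (auto intro: key)
  finally show ?thesis .
qed

lemma cl_subadd:
  assumes "a \<le> b" "b \<le> c"
  shows "curve_length \<gamma> a c \<le> curve_length \<gamma> a b + curve_length \<gamma> b c"
proof (rule cl_le)
  fix n t assume "part a c n t"
  then show "PS \<gamma> n t \<le> curve_length \<gamma> a b + curve_length \<gamma> b c"
    using assms
  proof (induction n arbitrary: a t)
    case 0
    then have "a = c" unfolding part_def by simp
    then show ?case unfolding PS_def by simp
  next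
    case (Suc n)
    have p: "part (t 1) c n (\<lambda>i. t (Suc i))" by (rule part_Suc[OF Suc.prems(1)])
    have a0: "t 0 = a" using Suc.prems unfolding part_def by simp
    have r: "a \<le> t 1" "t 1 \<le> c" using part_range[OF Suc.prems(1), of 1] a0 by auto
    show ?case
    proof (cases "t 1 \<le> b")
      case True
      have "PS \<gamma> (Suc n) t = ennreal (dist (\<gamma> a) (\<gamma> (t 1))) + PS \<gamma> n (\<lambda>i. t (Suc i))"
        unfolding PS_Suc a0 ..
      also have "\<dots> \<le> ennreal (dist (\<gamma> a) (\<gamma> (t 1))) + (curve_length \<gamma> (t 1) b + curve_length \<gamma> b c)"
        using Suc.IH[OF p True Suc.prems(3)] by (simp add: add_left_mono)
      also have "\<dots> = (ennreal (dist (\<gamma> a) (\<gamma> (t 1))) + curve_length \<gamma> (t 1) b) + curve_length \<gamma> b c"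
        by (simp add: add.assoc)
      also have "\<dots> \<le> curve_length \<gamma> a b + curve_length \<gamma> b c"
        by (rule add_right_mono[OF cl_prepend[OF r(1) True]])
      finally show ?thesis .
    next
      case False
      have "PS \<gamma> (Suc n) t = ennreal (dist (\<gamma> a) (\<gamma> (t 1))) + PS \<gamma> n (\<lambda>i. t (Suc i))"
        unfolding PS_Suc a0 ..
      also have "\<dots> \<le> (ennreal (dist (\<gamma> a) (\<gamma> b)) + ennreal (dist (\<gamma> b) (\<gamma> (t 1)))) + curve_length \<gamma> (t 1) c"
        using cl_ge[OF p, of \<gamma>] dist_triangle[of "\<gamma> a" "\<gamma> (t 1)" "\<gamma> b"]
        by (intro add_mono) (auto simp flip: ennreal_plus)
      also have "\<dots> = ennreal (dist (\<gamma> a) (\<gamma> b)) + (ennreal (dist (\<gamma> b) (\<gamma> (t 1))) + curve_length \<gamma> (t 1) c)"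
        by (simp add: add.assoc)
      also have "\<dots> \<le> curve_length \<gamma> a b + curve_length \<gamma> b c"
        using cl_dist[OF Suc.prems(2), of \<gamma>] cl_prepend[of b "t 1" c \<gamma>] False r
        by (intro add_mono) auto
      finally show ?thesis .
    qed
  qed
qed

lemma cl_add: "a \<le> b \<Longrightarrow> b \<le> c \<Longrightarrow> curve_length \<gamma> a c = curve_length \<gamma> a b + curve_length \<gamma> b c"
  using cl_subadd cl_superadd by (metis antisym)


lemma cl_mono_right: "a \<le> b \<Longrightarrow> b \<le> c \<Longrightarrow> curve_length \<gamma> a b \<le> curve_length \<gamma> a c"
  using cl_add[of a b c \<gamma>] by simp

lemma cl_mono_left: "a \<le> b \<Longrightarrow> b \<le> c \<Longrightarrow> curve_length \<gamma> b c \<le> curve_length \<gamma> a c"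
  using cl_add[of a b c \<gamma>] by simp

lemma cl_sub: "a \<le> b \<Longrightarrow> b \<le> c \<Longrightarrow> c \<le> d \<Longrightarrow> curve_length \<gamma> b c \<le> curve_length \<gamma> a d"
  by (meson cl_mono_left cl_mono_right order_trans)

lemma cl_append:
  assumes "a \<le> b" "b \<le> c"
  shows "curve_length \<gamma> a b + ennreal (dist (\<gamma> b) (\<gamma> c)) \<le> curve_length \<gamma> a c"
  using cl_add[OF assms, of \<gamma>] cl_dist[OF assms(2), of \<gamma>] by (simp add: add_left_mono)

lemma first_step:
  "part a c n t \<Longrightarrow> a < c \<Longrightarrow> \<exists>v. a < v \<and> v \<le> c \<and>
     (\<forall>u. a \<le> u \<and> u \<le> v \<longrightarrow> PS \<gamma> n t \<le> ennreal (dist (\<gamma> a) (\<gamma> u)) + curve_length \<gamma> u c)"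
proof (induction n arbitrary: t)
  case 0
  then show ?case unfolding part_def by simp
next
  case (Suc n)
  have a0: "t 0 = a" using Suc.prems unfolding part_def by simp
  have r: "a \<le> t 1" "t 1 \<le> c" using part_range[OF Suc.prems(1), of 1] a0 by auto
  have p: "part (t 1) c n (\<lambda>i. t (Suc i))" by (rule part_Suc[OF Suc.prems(1)])
  have ps: "PS \<gamma> (Suc n) t = ennreal (dist (\<gamma> a) (\<gamma> (t 1))) + PS \<gamma> n (\<lambda>i. t (Suc i))"
    unfolding PS_Suc a0 ..
  show ?case
  proof (cases "t 1 = a")
    case True
    from Suc.IH[of "\<lambda>i. t (Suc i)"] p True Suc.prems(2) obtain v where
      "a < v" "v \<le> c" "\<forall>u. a \<le> u \<and> u \<le> v \<longrightarrow> PS \<gamma> n (\<lambda>i. t (Suc i)) \<le> ennreal (dist (\<gamma> a) (\<gamma> u)) + curve_length \<gamma> u c"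
      by auto
    then show ?thesis using ps True by auto
  next
    case False
    then have lt: "a < t 1" using r by simp
    have "PS \<gamma> (Suc n) t \<le> ennreal (dist (\<gamma> a) (\<gamma> u)) + curve_length \<gamma> u c"
      if u: "a \<le> u" "u \<le> t 1" for u
    proof -
      have "PS \<gamma> (Suc n) t \<le> (ennreal (dist (\<gamma> a) (\<gamma> u)) + ennreal (dist (\<gamma> u) (\<gamma> (t 1)))) + curve_length \<gamma> (t 1) c"
        unfolding ps using cl_ge[OF p, of \<gamma>] dist_triangle[of "\<gamma> a" "\<gamma> (t 1)" "\<gamma> u"]
        by (intro add_mono) (auto simp flip: ennreal_plus)
      also have "\<dots> = ennreal (dist (\<gamma> a) (\<gamma> u)) + (ennreal (dist (\<gamma> u) (\<gamma> (t 1))) + curve_length \<gamma> (t 1) c)"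
        by (simp add: add.assoc)
      also have "\<dots> \<le> ennreal (dist (\<gamma> a) (\<gamma> u)) + curve_length \<gamma> u c"
        by (rule add_left_mono[OF cl_prepend]) (use u r in auto)
      finally show ?thesis .
    qed
    then show ?thesis using lt r by (intro exI[of _ "t 1"]) auto
  qed
qed

lemma last_step:
  "part a c n t \<Longrightarrow> a < c \<Longrightarrow> \<exists>v. a \<le> v \<and> v < c \<and>
     (\<forall>u. v \<le> u \<and> u \<le> c \<longrightarrow> PS \<gamma> n t \<le> curve_length \<gamma> a u + ennreal (dist (\<gamma> u) (\<gamma> c)))"
proof (induction n)
  case 0
  then show ?case unfolding part_def by simp
next
  case (Suc n)
  have cn: "t (Suc n) = c" using Suc.prems unfolding part_def by simp
  have r: "a \<le> t n" "t n \<le> c" using part_range[OF Suc.prems(1), of n] by auto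
  have p: "part a (t n) n t" by (rule part_butlast[OF Suc.prems(1)])
  have ps: "PS \<gamma> (Suc n) t = PS \<gamma> n t + ennreal (dist (\<gamma> (t n)) (\<gamma> c))"
    unfolding PS_Suc2 cn ..
  show ?case
  proof (cases "t n = c")
    case True
    then show ?thesis using Suc.IH p Suc.prems(2) ps by auto
  next
    case False
    then have lt: "t n < c" using r by simp
    have "PS \<gamma> (Suc n) t \<le> curve_length \<gamma> a u + ennreal (dist (\<gamma> u) (\<gamma> c))"
      if u: "t n \<le> u" "u \<le> c" for u
    proof -
      have "PS \<gamma> (Suc n) t \<le> curve_length \<gamma> a (t n) + (ennreal (dist (\<gamma> (t n)) (\<gamma> u)) + ennreal (dist (\<gamma> u) (\<gamma> c)))"
        unfolding ps using cl_ge[OF p, of \<gamma>] dist_triangle[of "\<gamma> (t n)" "\<gamma> c" "\<gamma> u"]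
        by (intro add_mono) (auto simp flip: ennreal_plus)
      also have "\<dots> = (curve_length \<gamma> a (t n) + ennreal (dist (\<gamma> (t n)) (\<gamma> u))) + ennreal (dist (\<gamma> u) (\<gamma> c))"
        by (simp add: add.assoc)
      also have "\<dots> \<le> curve_length \<gamma> a u + ennreal (dist (\<gamma> u) (\<gamma> c))"
        by (rule add_right_mono[OF cl_append]) (use u r in auto)
      finally show ?thesis .
    qed
    then show ?thesis using lt r by (intro exI[of _ "t n"]) auto
  qed
qed

lemma ennreal_fin: "(x::ennreal) < \<infinity> \<Longrightarrow> \<exists>r\<ge>0. x = ennreal r"
  by (cases x rule: ennreal_cases) auto

lemma cl_right_small:
  assumes "t0 < c" "curve_length \<gamma> t0 c < \<infinity>" "continuous_on {t0..c} \<gamma>" "\<epsilon> > 0"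
  shows "\<exists>u. t0 < u \<and> u \<le> c \<and> curve_length \<gamma> t0 u < ennreal \<epsilon>"
proof -
  obtain Lr where Lr: "Lr \<ge> 0" "curve_length \<gamma> t0 c = ennreal Lr" using ennreal_fin[OF assms(2)] by auto
  show ?thesis
  proof (cases "Lr < \<epsilon>")
    case True
    then show ?thesis using Lr assms(1) by (intro exI[of _ c]) (auto simp: ennreal_less_iff)
  next
    case False
    have "ennreal (Lr - \<epsilon>/2) < curve_length \<gamma> t0 c" using Lr False assms(4) by (simp add: ennreal_less_iff)
    then obtain n t where p: "part t0 c n t" and lt: "ennreal (Lr - \<epsilon>/2) < PS \<gamma> n t"
      unfolding cl_alt by (auto simp: less_SUP_iff)
    obtain v where v: "t0 < v" "v \<le> c"
      "\<And>u. t0 \<le> u \<Longrightarrow> u \<le> v \<Longrightarrow> PS \<gamma> n t \<le> ennreal (dist (\<gamma> t0) (\<gamma> u)) + curve_length \<gamma> u c"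
      using first_step[OF p assms(1), of \<gamma>] by auto
    have "continuous (at t0 within {t0..c}) \<gamma>"
      using assms(3) assms(1) by (simp add: continuous_on_eq_continuous_within)
    then obtain d where d: "d > 0" "\<And>u. u \<in> {t0..c} \<Longrightarrow> dist u t0 < d \<Longrightarrow> dist (\<gamma> u) (\<gamma> t0) < \<epsilon>/2"
      unfolding continuous_within_eps_delta using assms(4) by (metis half_gt_zero)
    define u where "u = min v (t0 + d/2)"
    have u: "t0 < u" "u \<le> v" "u \<le> c" using v d unfolding u_def by auto
    have du: "dist (\<gamma> t0) (\<gamma> u) < \<epsilon>/2" using d(2)[of u] u d(1) unfolding u_def
      by (auto simp: dist_real_def dist_commute)
    have add: "curve_length \<gamma> t0 c = curve_length \<gamma> t0 u + curve_length \<gamma> u c"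
      using u by (intro cl_add) auto
    obtain A where A: "A \<ge> 0" "curve_length \<gamma> t0 u = ennreal A"
      using ennreal_fin[of "curve_length \<gamma> t0 u"] add assms(2) by (auto simp: top_unique)
    obtain B where B: "B \<ge> 0" "curve_length \<gamma> u c = ennreal B"
      using ennreal_fin[of "curve_length \<gamma> u c"] add assms(2) by (auto simp: top_unique)
    have AB: "A + B = Lr" using add A B Lr by (simp flip: ennreal_plus)
    have "ennreal (Lr - \<epsilon>/2) < ennreal (dist (\<gamma> t0) (\<gamma> u) + B)"
      using lt v(3)[of u] u B by (simp add: ennreal_plus)
    then have "Lr - \<epsilon>/2 < dist (\<gamma> t0) (\<gamma> u) + B"
      using False assms(4) by (subst (asm) ennreal_less_iff) auto
    then have "A < \<epsilon>" using AB du by linarith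
    then show ?thesis using u A by (intro exI[of _ u]) (auto simp: ennreal_less_iff)
  qed
qed

lemma cl_left_small:
  assumes "a < t0" "curve_length \<gamma> a t0 < \<infinity>" "continuous_on {a..t0} \<gamma>" "\<epsilon> > 0"
  shows "\<exists>u. a \<le> u \<and> u < t0 \<and> curve_length \<gamma> u t0 < ennreal \<epsilon>"
proof -
  obtain Lr where Lr: "Lr \<ge> 0" "curve_length \<gamma> a t0 = ennreal Lr" using ennreal_fin[OF assms(2)] by auto
  show ?thesis
  proof (cases "Lr < \<epsilon>")
    case True
    then show ?thesis using Lr assms(1) by (intro exI[of _ a]) (auto simp: ennreal_less_iff)
  next
    case False
    have "ennreal (Lr - \<epsilon>/2) < curve_length \<gamma> a t0" using Lr False assms(4) by (simp add: ennreal_less_iff)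
    then obtain n t where p: "part a t0 n t" and lt: "ennreal (Lr - \<epsilon>/2) < PS \<gamma> n t"
      unfolding cl_alt by (auto simp: less_SUP_iff)
    obtain v where v: "a \<le> v" "v < t0"
      "\<And>u. v \<le> u \<Longrightarrow> u \<le> t0 \<Longrightarrow> PS \<gamma> n t \<le> curve_length \<gamma> a u + ennreal (dist (\<gamma> u) (\<gamma> t0))"
      using last_step[OF p assms(1), of \<gamma>] by auto
    have "continuous (at t0 within {a..t0}) \<gamma>"
      using assms(3) assms(1) by (simp add: continuous_on_eq_continuous_within)
    then obtain d where d: "d > 0" "\<And>u. u \<in> {a..t0} \<Longrightarrow> dist u t0 < d \<Longrightarrow> dist (\<gamma> u) (\<gamma> t0) < \<epsilon>/2"
      unfolding continuous_within_eps_delta using assms(4) by (metis half_gt_zero)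
    define u where "u = max v (t0 - d/2)"
    have u: "u < t0" "v \<le> u" "a \<le> u" using v d unfolding u_def by auto
    have du: "dist (\<gamma> u) (\<gamma> t0) < \<epsilon>/2" using d(2)[of u] u d(1) unfolding u_def
      by (auto simp: dist_real_def dist_commute)
    have add: "curve_length \<gamma> a t0 = curve_length \<gamma> a u + curve_length \<gamma> u t0"
      using u by (intro cl_add) auto
    obtain A where A: "A \<ge> 0" "curve_length \<gamma> u t0 = ennreal A"
      using ennreal_fin[of "curve_length \<gamma> u t0"] add assms(2) by (auto simp: top_unique)
    obtain B where B: "B \<ge> 0" "curve_length \<gamma> a u = ennreal B"
      using ennreal_fin[of "curve_length \<gamma> a u"] add assms(2) by (auto simp: top_unique)
    have AB: "A + B = Lr" using add A B Lr by (simp flip: ennreal_plus)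
    have "ennreal (Lr - \<epsilon>/2) < ennreal (B + dist (\<gamma> u) (\<gamma> t0))"
      using lt v(3)[of u] u B by (simp add: ennreal_plus)
    then have "Lr - \<epsilon>/2 < B + dist (\<gamma> u) (\<gamma> t0)"
      using False assms(4) by (subst (asm) ennreal_less_iff) auto
    then have "A < \<epsilon>" using AB du by linarith
    then show ?thesis using u A by (intro exI[of _ u]) (auto simp: ennreal_less_iff)
  qed
qed


lemma enn2real_lt: "z < ennreal e \<Longrightarrow> enn2real z < e"
  by (cases z rule: ennreal_cases) (auto simp: ennreal_less_iff)

lemma cl_fin_sub: "curve_length \<gamma> a b < \<infinity> \<Longrightarrow> a \<le> x \<Longrightarrow> x \<le> y \<Longrightarrow> y \<le> b \<Longrightarrow> curve_length \<gamma> x y < \<infinity>"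
  using cl_sub[of a x y b \<gamma>] by (meson le_less_trans)

lemma cl_enn2real_add:
  assumes "curve_length \<gamma> a b < \<infinity>" "a \<le> x" "x \<le> y" "y \<le> b"
  shows "enn2real (curve_length \<gamma> a y) = enn2real (curve_length \<gamma> a x) + enn2real (curve_length \<gamma> x y)"
proof -
  have "curve_length \<gamma> a y = curve_length \<gamma> a x + curve_length \<gamma> x y" using assms by (intro cl_add) auto
  moreover have "curve_length \<gamma> a x < \<infinity>" "curve_length \<gamma> x y < \<infinity>"
    using cl_fin_sub[OF assms(1)] assms by auto
  ultimately show ?thesis by (simp add: enn2real_plus)
qed

lemma cl_cont:
  assumes ab: "a \<le> b" and fin: "curve_length \<gamma> a b < \<infinity>" and cont: "continuous_on {a..b} \<gamma>"
  shows "continuous_on {a..b} (\<lambda>t. enn2real (curve_length \<gamma> a t))"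
  unfolding continuous_on_iff
proof (intro ballI allI impI)
  fix x e :: real assume x: "x \<in> {a..b}" and e: "0 < e"
  obtain dr where dr: "dr > 0" "\<And>y. x \<le> y \<Longrightarrow> y \<le> b \<Longrightarrow> y - x < dr \<Longrightarrow> curve_length \<gamma> x y < ennreal e"
  proof (cases "x < b")
    case True
    have "continuous_on {x..b} \<gamma>" by (rule continuous_on_subset[OF cont]) (use x in auto)
    moreover have "curve_length \<gamma> x b < \<infinity>" using cl_fin_sub[OF fin, of x b] x by simp
    ultimately obtain u where u: "x < u" "u \<le> b" "curve_length \<gamma> x u < ennreal e"
      using cl_right_small[OF True _ _ e] by blast
    show ?thesis
    proof (rule that[of "u - x"])
      fix y assume "x \<le> y" "y \<le> b" "y - x < u - x"
      then have "curve_length \<gamma> x y \<le> curve_length \<gamma> x u" by (intro cl_mono_right) auto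
      then show "curve_length \<gamma> x y < ennreal e" using u(3) by simp
    qed (use u in auto)
  next
    case False
    show ?thesis
    proof (rule that[of 1])
      fix y assume "x \<le> y" "y \<le> b" "y - x < 1"
      then have "y = x" using False by simp
      then show "curve_length \<gamma> x y < ennreal e" using e by (simp add: cl_refl)
    qed simp
  qed
  obtain dl where dl: "dl > 0" "\<And>y. a \<le> y \<Longrightarrow> y \<le> x \<Longrightarrow> x - y < dl \<Longrightarrow> curve_length \<gamma> y x < ennreal e"
  proof (cases "a < x")
    case True
    have "continuous_on {a..x} \<gamma>" by (rule continuous_on_subset[OF cont]) (use x in auto)
    moreover have "curve_length \<gamma> a x < \<infinity>" using cl_fin_sub[OF fin, of a x] x by simp
    ultimately obtain u where u: "a \<le> u" "u < x" "curve_length \<gamma> u x < ennreal e"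
      using cl_left_small[OF True _ _ e] by blast
    show ?thesis
    proof (rule that[of "x - u"])
      fix y assume "a \<le> y" "y \<le> x" "x - y < x - u"
      then have "curve_length \<gamma> y x \<le> curve_length \<gamma> u x" by (intro cl_mono_left) auto
      then show "curve_length \<gamma> y x < ennreal e" using u(3) by simp
    qed (use u in auto)
  next
    case False
    show ?thesis
    proof (rule that[of 1])
      fix y assume "a \<le> y" "y \<le> x" "x - y < 1"
      then have "y = x" using False by simp
      then show "curve_length \<gamma> y x < ennreal e" using e by (simp add: cl_refl)
    qed simp
  qed
  show "\<exists>d>0. \<forall>y\<in>{a..b}. dist y x < d \<longrightarrow>
          dist (enn2real (curve_length \<gamma> a y)) (enn2real (curve_length \<gamma> a x)) < e"
  proof (intro exI[of _ "min dr dl"] conjI ballI impI)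
    show "min dr dl > 0" using dr(1) dl(1) by simp
  next
    fix y assume y: "y \<in> {a..b}" "dist y x < min dr dl"
    have ya: "a \<le> y" "y \<le> b" using y(1) by auto
    have xa: "a \<le> x" "x \<le> b" using x by auto
    show "dist (enn2real (curve_length \<gamma> a y)) (enn2real (curve_length \<gamma> a x)) < e"
    proof (cases "x \<le> y")
      case True
      have 1: "enn2real (curve_length \<gamma> a y) = enn2real (curve_length \<gamma> a x) + enn2real (curve_length \<gamma> x y)"
        by (rule cl_enn2real_add[OF fin xa(1) True ya(2)])
      have "y - x < dr" using y(2) True by (simp add: dist_real_def)
      then have "curve_length \<gamma> x y < ennreal e" by (rule dr(2)[OF True ya(2)])
      then have 2: "enn2real (curve_length \<gamma> x y) < e" by (rule enn2real_lt)
      have 3: "enn2real (curve_length \<gamma> x y) \<ge> 0" by simp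
      show ?thesis unfolding dist_real_def 1 using 2 3 by linarith
    next
      case False
      then have F: "y \<le> x" by simp
      have 1: "enn2real (curve_length \<gamma> a x) = enn2real (curve_length \<gamma> a y) + enn2real (curve_length \<gamma> y x)"
        by (rule cl_enn2real_add[OF fin ya(1) F xa(2)])
      have "x - y < dl" using y(2) F by (simp add: dist_real_def)
      then have "curve_length \<gamma> y x < ennreal e" by (rule dl(2)[OF ya(1) F])
      then have 2: "enn2real (curve_length \<gamma> y x) < e" by (rule enn2real_lt)
      have 3: "enn2real (curve_length \<gamma> y x) \<ge> 0" by simp
      show ?thesis unfolding dist_real_def 1 using 2 3 by linarith
    qed
  qed
qed

lemma cl_lip:
  assumes "K-lipschitz_on {a..b} \<gamma>" "a \<le> b"
  shows "curve_length \<gamma> a b \<le> ennreal (K * (b - a))"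
proof (rule cl_le)
  fix n t assume p: "part a b n t"
  have K: "K \<ge> 0" using assms(1) by (simp add: lipschitz_on_def)
  have "PS \<gamma> n t \<le> (\<Sum>i<n. ennreal (K * (t (Suc i) - t i)))"
    unfolding PS_def
  proof (rule sum_mono)
    fix i assume i: "i \<in> {..<n}"
    have r: "a \<le> t i" "t i \<le> b" "a \<le> t (Suc i)" "t (Suc i) \<le> b" "t i \<le> t (Suc i)"
      using part_range[OF p, of i] part_range[OF p, of "Suc i"] i p unfolding part_def by auto
    have "dist (\<gamma> (t i)) (\<gamma> (t (Suc i))) \<le> K * dist (t i) (t (Suc i))"
      using assms(1) r unfolding lipschitz_on_def by auto
    also have "\<dots> = K * (t (Suc i) - t i)" using r by (simp add: dist_real_def)
    finally show "ennreal (dist (\<gamma> (t i)) (\<gamma> (t (Suc i)))) \<le> ennreal (K * (t (Suc i) - t i))"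
      by (rule ennreal_leI)
  qed
  also have "\<dots> = ennreal (\<Sum>i<n. K * (t (Suc i) - t i))"
    using p K by (intro sum_ennreal) (auto simp: part_def)
  also have "(\<Sum>i<n. K * (t (Suc i) - t i)) = K * (b - a)"
    using p by (simp add: sum_distrib_left[symmetric] sum_lessThan_telescope part_def)
  finally show "PS \<gamma> n t \<le> ennreal (K * (b - a))" .
qed

lemma cl_comp:
  assumes "\<And>x y. x \<in> {a..b} \<Longrightarrow> y \<in> {a..b} \<Longrightarrow> dist (\<phi> x) (\<phi> y) \<le> dist (\<gamma> x) (\<gamma> y)"
  shows "curve_length \<phi> a b \<le> curve_length \<gamma> a b"
proof (rule cl_le)
  fix n t assume p: "part a b n t"
  have "PS \<phi> n t \<le> PS \<gamma> n t"
    unfolding PS_def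
  proof (rule sum_mono)
    fix i assume i: "i \<in> {..<n}"
    have r: "t i \<in> {a..b}" "t (Suc i) \<in> {a..b}"
      using part_range[OF p, of i] part_range[OF p, of "Suc i"] i by auto
    show "ennreal (dist (\<phi> (t i)) (\<phi> (t (Suc i)))) \<le> ennreal (dist (\<gamma> (t i)) (\<gamma> (t (Suc i))))"
      using assms[OF r] by (rule ennreal_leI)
  qed
  also have "\<dots> \<le> curve_length \<gamma> a b" by (rule cl_ge[OF p])
  finally show "PS \<phi> n t \<le> curve_length \<gamma> a b" .
qed



lemma arc_exists:
  assumes cont: "continuous_on {0..1} \<gamma>" and lenL: "len \<gamma> = ennreal L" and s: "0 \<le> s" "s \<le> L"
  shows "\<exists>t\<in>{0..1}. curve_length \<gamma> 0 t = ennreal s"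
proof -
  have fin: "curve_length \<gamma> 0 1 < \<infinity>" using lenL by (simp add: len_def)
  have L0: "L \<ge> 0" using s by simp
  have c: "continuous_on {0..1} (\<lambda>t. enn2real (curve_length \<gamma> 0 t))"
    by (rule cl_cont[OF _ fin cont]) simp
  have "enn2real (curve_length \<gamma> 0 0) \<le> s" using s by (simp add: cl_refl)
  moreover have "s \<le> enn2real (curve_length \<gamma> 0 1)" using lenL s L0 by (simp add: len_def)
  ultimately obtain t where t: "0 \<le> t" "t \<le> 1" "enn2real (curve_length \<gamma> 0 t) = s"
    using IVT'[of "\<lambda>t. enn2real (curve_length \<gamma> 0 t)" 0 s 1, OF _ _ _ c] by auto
  have "curve_length \<gamma> 0 t < \<infinity>" using cl_fin_sub[OF fin, of 0 t] t by simp
  then have "curve_length \<gamma> 0 t = ennreal s" using t(3) s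
    by (cases "curve_length \<gamma> 0 t" rule: ennreal_cases) auto
  then show ?thesis using t by auto
qed

lemma arc_param:
  assumes cont: "continuous_on {0..1} \<gamma>" and lenL: "len \<gamma> = ennreal L" and s: "0 \<le> s" "s \<le> L"
  shows "\<exists>t\<in>{0..1}. curve_length \<gamma> 0 t = ennreal s \<and> arclength_param \<gamma> s = \<gamma> t"
proof -
  have ex: "\<exists>t. t \<in> {0..1} \<and> curve_length \<gamma> 0 t = ennreal s" using arc_exists[OF assms] by auto
  define t where "t = (SOME t. t \<in> {0..1} \<and> curve_length \<gamma> 0 t = ennreal s)"
  have "t \<in> {0..1} \<and> curve_length \<gamma> 0 t = ennreal s" unfolding t_def by (rule someI_ex[OF ex])
  moreover have "arclength_param \<gamma> s = \<gamma> t" unfolding arclength_param_def t_def ..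
  ultimately show ?thesis by auto
qed

lemma same_point_aux:
  assumes fin: "curve_length \<gamma> 0 1 < \<infinity>" and t: "0 \<le> t" "t \<le> t'" "t' \<le> 1"
    and eq: "curve_length \<gamma> 0 t = curve_length \<gamma> 0 t'"
  shows "\<gamma> t = \<gamma> t'"
proof -
  have "enn2real (curve_length \<gamma> 0 t') = enn2real (curve_length \<gamma> 0 t) + enn2real (curve_length \<gamma> t t')"
    by (rule cl_enn2real_add[OF fin t])
  then have "enn2real (curve_length \<gamma> t t') = 0" using eq by simp
  moreover have "curve_length \<gamma> t t' < \<infinity>" by (rule cl_fin_sub[OF fin t])
  ultimately have "curve_length \<gamma> t t' = 0" by (auto simp: enn2real_eq_0_iff)
  then have "ennreal (dist (\<gamma> t) (\<gamma> t')) \<le> 0" using cl_dist[OF t(2), of \<gamma>] by simp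
  then show ?thesis by simp
qed

lemma same_point:
  assumes fin: "curve_length \<gamma> 0 1 < \<infinity>" and t: "t \<in> {0..1}" "t' \<in> {0..1}"
    and eq: "curve_length \<gamma> 0 t = curve_length \<gamma> 0 t'"
  shows "\<gamma> t = \<gamma> t'"
proof (cases "t \<le> t'")
  case True
  have "0 \<le> t" "t' \<le> 1" using t by auto
  then show ?thesis using same_point_aux[OF fin _ True _ eq] by blast
next
  case False
  have "0 \<le> t'" "t \<le> 1" "t' \<le> t" using t False by auto
  then show ?thesis using same_point_aux[OF fin _ _ _ eq[symmetric]] by metis
qed

lemma arc_lip_aux:
  assumes cont: "continuous_on {0..1} \<gamma>" and lenL: "len \<gamma> = ennreal L"
    and s: "0 \<le> s" "s \<le> s'" "s' \<le> L"
  shows "dist (arclength_param \<gamma> s) (arclength_param \<gamma> s') \<le> s' - s"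
proof -
  have fin: "curve_length \<gamma> 0 1 < \<infinity>" using lenL by (simp add: len_def)
  obtain t where t: "t \<in> {0..1}" "curve_length \<gamma> 0 t = ennreal s" "arclength_param \<gamma> s = \<gamma> t"
    using arc_param[OF cont lenL, of s] s by auto
  obtain t' where t': "t' \<in> {0..1}" "curve_length \<gamma> 0 t' = ennreal s'" "arclength_param \<gamma> s' = \<gamma> t'"
    using arc_param[OF cont lenL, of s'] s by auto
  show ?thesis
  proof (cases "t \<le> t'")
    case True
    have "curve_length \<gamma> 0 t' = curve_length \<gamma> 0 t + curve_length \<gamma> t t'"
      using True t t' by (intro cl_add) auto
    then have "ennreal s' = ennreal s + curve_length \<gamma> t t'" using t t' by simp
    then have "curve_length \<gamma> t t' = ennreal (s' - s)"
      using s by (cases "curve_length \<gamma> t t'" rule: ennreal_cases) (auto simp flip: ennreal_plus)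
    then have "ennreal (dist (\<gamma> t) (\<gamma> t')) \<le> ennreal (s' - s)" using cl_dist[OF True, of \<gamma>] by simp
    then show ?thesis using t t' s by (simp add: ennreal_le_iff)
  next
    case False
    have "curve_length \<gamma> 0 t' \<le> curve_length \<gamma> 0 t"
      using False t t' by (intro cl_mono_right) auto
    then have "s' \<le> s" using t t' s by (simp add: ennreal_le_iff)
    then have "s = s'" using s by simp
    then show ?thesis by simp
  qed
qed

lemma arc_lip:
  assumes cont: "continuous_on {0..1} \<gamma>" and lenL: "len \<gamma> = ennreal L"
  shows "1-lipschitz_on {0..L} (arclength_param \<gamma>)"
  unfolding lipschitz_on_def
proof (intro conjI ballI)
  fix x y assume x: "x \<in> {0..L}" and y: "y \<in> {0..L}"
  show "dist (arclength_param \<gamma> x) (arclength_param \<gamma> y) \<le> 1 * dist x y"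
  proof (cases "x \<le> y")
    case True then show ?thesis using arc_lip_aux[OF cont lenL, of x y] x y by (simp add: dist_real_def)
  next
    case False then show ?thesis using arc_lip_aux[OF cont lenL, of y x] x y
      by (simp add: dist_real_def dist_commute)
  qed
qed simp

lemma arc_0:
  assumes cont: "continuous_on {0..1} \<gamma>" and lenL: "len \<gamma> = ennreal L" and L: "L \<ge> 0"
  shows "arclength_param \<gamma> 0 = \<gamma> 0"
proof -
  have fin: "curve_length \<gamma> 0 1 < \<infinity>" using lenL by (simp add: len_def)
  obtain t where t: "t \<in> {0..1}" "curve_length \<gamma> 0 t = ennreal 0" "arclength_param \<gamma> 0 = \<gamma> t"
    using arc_param[OF cont lenL, of 0] L by auto
  have "\<gamma> t = \<gamma> 0" using same_point[OF fin t(1), of 0] t(2) by (simp add: cl_refl)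
  then show ?thesis using t by simp
qed

lemma arc_L:
  assumes cont: "continuous_on {0..1} \<gamma>" and lenL: "len \<gamma> = ennreal L" and L: "L \<ge> 0"
  shows "arclength_param \<gamma> L = \<gamma> 1"
proof -
  have fin: "curve_length \<gamma> 0 1 < \<infinity>" using lenL by (simp add: len_def)
  obtain t where t: "t \<in> {0..1}" "curve_length \<gamma> 0 t = ennreal L" "arclength_param \<gamma> L = \<gamma> t"
    using arc_param[OF cont lenL, of L] L by auto
  have "\<gamma> t = \<gamma> 1" using same_point[OF fin t(1), of 1] t(2) lenL by (simp add: len_def)
  then show ?thesis using t by simp
qed



lemma measure_comparison:
  fixes M1 M2 :: "real measure"
  assumes fb1: "finite_borel_measure M1" and fb2: "finite_borel_measure M2"
    and int: "\<And>a b. a \<le> b \<Longrightarrow> measure M1 {a<..b} \<le> measure M2 {a<..b}"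
  shows "M1 \<le> M2"
proof -
  interpret m1: finite_borel_measure M1 by (rule fb1)
  interpret m2: finite_borel_measure M2 by (rule fb2)
  have s1: "sets M1 = sets borel" by (rule m1.M_is_borel)
  have s2: "sets M2 = sets borel" by (rule m2.M_is_borel)
  define F where "F x = cdf M2 x - cdf M1 x" for x
  have Fmono: "F x \<le> F y" if "x \<le> y" for x y
  proof (cases "x = y")
    case True then show ?thesis by simp
  next
    case False
    then have xy: "x < y" using that by simp
    have "cdf M2 y - cdf M2 x = measure M2 {x<..y}" by (rule m2.cdf_diff_eq[OF xy])
    moreover have "cdf M1 y - cdf M1 x = measure M1 {x<..y}" by (rule m1.cdf_diff_eq[OF xy])
    ultimately show ?thesis using int[of x y] that unfolding F_def by linarith
  qed
  have Fcont: "continuous (at_right a) F" for a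
    unfolding F_def by (intro continuous_diff m1.cdf_is_right_cont m2.cdf_is_right_cont)
  define K where "K = interval_measure F"
  have sK: "sets K = sets borel" unfolding K_def by simp
  have spK: "space K = UNIV" unfolding K_def by simp
  have Kint: "emeasure K {a<..b} = ennreal (F b - F a)" if "a \<le> b" for a b
    unfolding K_def by (rule emeasure_interval_measure_Ioc[OF that Fmono Fcont])
  have Fdiff: "F b - F a = measure M2 {a<..b} - measure M1 {a<..b}" if "a \<le> b" for a b
  proof (cases "a = b")
    case True then show ?thesis by simp
  next
    case False
    then have ab: "a < b" using that by simp
    show ?thesis using m2.cdf_diff_eq[OF ab] m1.cdf_diff_eq[OF ab] unfolding F_def by simp
  qed
  define I where "I n = {- real n<..real n}" for n :: nat
  have Iinc: "incseq I" unfolding I_def incseq_def by auto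
  have IU: "(\<Union>n. I n) = UNIV" unfolding I_def by (rule UN_Ioc_eq_UNIV)
  have Isets: "range I \<subseteq> sets borel" unfolding I_def by auto
  have "emeasure K UNIV = (SUP n. emeasure K (I n))"
    using SUP_emeasure_incseq[of I K] Isets Iinc IU sK by simp
  also have "\<dots> \<le> ennreal (measure M2 UNIV)"
  proof (rule SUP_least)
    fix n
    have le: "- real n \<le> real n" by simp
    have "emeasure K (I n) = ennreal (measure M2 (I n) - measure M1 (I n))"
      unfolding I_def using Kint[OF le] Fdiff[OF le] by simp
    also have "\<dots> \<le> ennreal (measure M2 UNIV)"
    proof (rule ennreal_leI)
      have "measure M2 (I n) \<le> measure M2 UNIV"
        using m2.bounded_measure[of "I n"] m2.borel_UNIV by simp
      moreover have "measure M1 (I n) \<ge> 0" by simp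
      ultimately show "measure M2 (I n) - measure M1 (I n) \<le> measure M2 UNIV" by linarith
    qed
    finally show "emeasure K (I n) \<le> ennreal (measure M2 UNIV)" .
  qed
  finally have "emeasure K UNIV < \<infinity>" using le_less_trans by fastforce
  then have finK: "finite_measure K" by (intro finite_measureI) (simp add: spK)
  interpret k: finite_measure K by (rule finK)
  have Kmeas: "measure K {a<..b} = F b - F a" if "a \<le> b" for a b
    unfolding K_def by (rule measure_interval_measure_Ioc[OF that Fmono Fcont])
  have lim1: "(\<lambda>n. measure M1 (I n)) \<longlonglongrightarrow> measure M1 UNIV"
    using m1.finite_Lim_measure_incseq[of I] Isets Iinc IU s1 by simp
  have lim2: "(\<lambda>n. measure M2 (I n)) \<longlonglongrightarrow> measure M2 UNIV"
    using m2.finite_Lim_measure_incseq[of I] Isets Iinc IU s2 by simp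
  have limK: "(\<lambda>n. measure K (I n)) \<longlonglongrightarrow> measure K UNIV"
    using k.finite_Lim_measure_incseq[of I] Isets Iinc IU sK by simp
  have eqI: "measure M2 (I n) = measure M1 (I n) + measure K (I n)" for n
  proof -
    have le: "- real n \<le> real n" by simp
    show ?thesis unfolding I_def using Kmeas[OF le] Fdiff[OF le] by simp
  qed
  have PU: "measure M2 UNIV = measure M1 UNIV + measure K UNIV"
  proof -
    have "(\<lambda>n. measure M1 (I n) + measure K (I n)) \<longlonglongrightarrow> measure M1 UNIV + measure K UNIV"
      by (rule tendsto_add[OF lim1 limK])
    then have "(\<lambda>n. measure M2 (I n)) \<longlonglongrightarrow> measure M1 UNIV + measure K UNIV"
      using eqI by simp
    then show ?thesis using lim2 LIMSEQ_unique by blast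
  qed
  define G where "G = range (\<lambda>(a, b). {a<..b::real})"
  have sG: "sets borel = sigma_sets UNIV G"
    unfolding G_def by (subst borel_sigma_sets_Ioc) (simp add: sets_measure_of)
  have IsG: "Int_stable G"
    unfolding Int_stable_def
  proof (intro ballI)
    fix X Y assume "X \<in> G" "Y \<in> G"
    then obtain a b c d where X: "X = {a<..b}" and Y: "Y = {c<..d}" unfolding G_def by auto
    have "X \<inter> Y = {max a c<..min b d}" unfolding X Y by auto
    then show "X \<inter> Y \<in> G" unfolding G_def by (auto intro: rev_image_eqI[of "(max a c, min b d)"])
  qed
  have P: "measure M2 A = measure M1 A + measure K A" if A: "A \<in> sets borel" for A
  proof -
    have AG: "A \<in> sigma_sets UNIV G" using A sG by simp
    have GP: "G \<subseteq> Pow UNIV" by simp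
    from IsG GP AG show ?thesis
    proof (induction rule: sigma_sets_induct_disjoint)
      case (basic A)
      then obtain a b where A: "A = {a<..b}" unfolding G_def by auto
      show ?case
      proof (cases "a \<le> b")
        case True then show ?thesis unfolding A using Kmeas[OF True] Fdiff[OF True] by simp
      next
        case False then show ?thesis unfolding A by simp
      qed
    next
      case empty then show ?case by simp
    next
      case (compl A)
      have AB: "A \<in> sets borel" using compl.hyps sG by simp
      have "measure M2 (UNIV - A) = measure M2 UNIV - measure M2 A"
        using m2.finite_measure_compl[of A] AB s2 m2.borel_UNIV by simp
      moreover have "measure M1 (UNIV - A) = measure M1 UNIV - measure M1 A"
        using m1.finite_measure_compl[of A] AB s1 m1.borel_UNIV by simp
      moreover have "measure K (UNIV - A) = measure K UNIV - measure K A"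
        using k.finite_measure_compl[of A] AB sK spK by simp
      ultimately show ?case using compl.IH PU by simp
    next
      case (union A)
      have AB: "range A \<subseteq> sets borel" using union.hyps sG by simp
      have "(\<lambda>i. measure M2 (A i)) sums measure M2 (\<Union>i. A i)"
        using m2.finite_measure_UNION[of A] AB s2 union.hyps by simp
      moreover have "(\<lambda>i. measure M1 (A i) + measure K (A i)) sums (measure M1 (\<Union>i. A i) + measure K (\<Union>i. A i))"
        using m1.finite_measure_UNION[of A] k.finite_measure_UNION[of A] AB s1 sK union.hyps
        by (intro sums_add) simp_all
      ultimately show ?case using union.IH sums_unique2 by simp
    qed
  qed
  show ?thesis
  proof (subst le_measure)
    show "sets M1 = sets M2" using s1 s2 by simp
    show "\<forall>A\<in>sets M1. emeasure M1 A \<le> emeasure M2 A"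
    proof
      fix A assume "A \<in> sets M1"
      then have A: "A \<in> sets borel" using s1 by simp
      have "measure M1 A \<le> measure M2 A" using P[OF A] by simp
      then show "emeasure M1 A \<le> emeasure M2 A"
        using m1.emeasure_eq_measure m2.emeasure_eq_measure by (simp add: ennreal_leI)
    qed
  qed
qed


lemma E_ineq:
  fixes \<sigma> :: "real \<Rightarrow> real" and g :: "real \<Rightarrow> ennreal"
  assumes L: "0 \<le> L" and g: "g \<in> borel_measurable borel" and s0: "\<sigma> 0 = 0" and sL: "\<sigma> L = L'"
    and mono: "\<And>a b. 0 \<le> a \<Longrightarrow> a \<le> b \<Longrightarrow> b \<le> L \<Longrightarrow> \<sigma> a \<le> \<sigma> b"
    and lip: "\<And>a b. 0 \<le> a \<Longrightarrow> a \<le> b \<Longrightarrow> b \<le> L \<Longrightarrow> \<sigma> b - \<sigma> a \<le> b - a"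
  shows "(\<integral>\<^sup>+u\<in>{0..L'}. g u \<partial>lborel) \<le> (\<integral>\<^sup>+s\<in>{0..L}. g (\<sigma> s) \<partial>lborel)"
proof -
  have L'0: "0 \<le> L'" using mono[of 0 L] L s0 sL by simp
  define c where "c s = max 0 (min L s)" for s
  define \<sigma>c where "\<sigma>c s = \<sigma> (c s)" for s
  have c: "0 \<le> c s" "c s \<le> L" for s unfolding c_def using L by auto
  have cl: "\<bar>c x - c y\<bar> \<le> \<bar>x - y\<bar>" for x y unfolding c_def by auto
  have cid: "s \<in> {0..L} \<Longrightarrow> c s = s" for s unfolding c_def by auto
  have sig_lip: "\<bar>\<sigma> x - \<sigma> y\<bar> \<le> \<bar>x - y\<bar>" if "x \<in> {0..L}" "y \<in> {0..L}" for x y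
  proof (cases "x \<le> y")
    case True then show ?thesis using mono[of x y] lip[of x y] that by auto
  next
    case False then show ?thesis using mono[of y x] lip[of y x] that by auto
  qed
  have "1-lipschitz_on UNIV \<sigma>c"
    unfolding lipschitz_on_def
  proof (intro conjI ballI)
    fix x y :: real
    have "\<bar>\<sigma> (c x) - \<sigma> (c y)\<bar> \<le> \<bar>c x - c y\<bar>" using sig_lip c by auto
    also have "\<dots> \<le> \<bar>x - y\<bar>" by (rule cl)
    finally show "dist (\<sigma>c x) (\<sigma>c y) \<le> 1 * dist x y" unfolding \<sigma>c_def dist_real_def by simp
  qed simp
  then have contc: "continuous_on UNIV \<sigma>c" by (rule lipschitz_on_continuous_on)
  then have measc: "\<sigma>c \<in> borel_measurable borel" by (rule borel_measurable_continuous_onI)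
  have contsig: "continuous_on {0..L} \<sigma>"
  proof -
    have "continuous_on {0..L} \<sigma>c" using contc by (rule continuous_on_subset) simp
    moreover have "\<And>x. x \<in> {0..L} \<Longrightarrow> \<sigma>c x = \<sigma> x" unfolding \<sigma>c_def using cid by simp
    ultimately show ?thesis using continuous_on_cong by blast
  qed
  define M0 where "M0 = density lborel (indicator {0..L})"
  define M1 where "M1 = density lborel (indicator {0..L'})"
  define M2 where "M2 = distr M0 borel \<sigma>c"
  have sM0: "sets M0 = sets borel" unfolding M0_def by simp
  have sM1: "sets M1 = sets borel" unfolding M1_def by simp
  have sM2: "sets M2 = sets borel" unfolding M2_def by simp
  have measc0: "\<sigma>c \<in> M0 \<rightarrow>\<^sub>M borel" using measc unfolding M0_def by simp
  have eM1: "emeasure M1 A = emeasure lborel ({0..L'} \<inter> A)" if "A \<in> sets borel" for A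
    unfolding M1_def using that by (intro emeasure_restricted) auto
  have eM2: "emeasure M2 A = emeasure lborel ({0..L} \<inter> \<sigma>c -` A)" if A: "A \<in> sets borel" for A
  proof -
    have "emeasure M2 A = emeasure M0 (\<sigma>c -` A \<inter> space M0)"
      unfolding M2_def by (rule emeasure_distr[OF measc0 A[folded sets_borel]]) 
    also have "\<dots> = emeasure M0 (\<sigma>c -` A)" unfolding M0_def by simp
    also have "\<dots> = emeasure lborel ({0..L} \<inter> \<sigma>c -` A)"
      unfolding M0_def using measurable_sets_borel[OF measc A] by (intro emeasure_restricted) auto
    finally show ?thesis .
  qed
  have fb1: "finite_borel_measure M1"
  proof -
    have "emeasure M1 (space M1) = ennreal L'"
      using eM1[of UNIV] L'0 unfolding M1_def by simp
    then have "finite_measure M1" by (intro finite_measureI) simp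
    then show ?thesis using sM1 unfolding finite_borel_measure_def finite_borel_measure_axioms_def by simp
  qed
  have fb2: "finite_borel_measure M2"
  proof -
    have "emeasure M2 (space M2) = ennreal L"
      using eM2[of UNIV] L unfolding M2_def by simp
    then have "finite_measure M2" by (intro finite_measureI) simp
    then show ?thesis using sM2 unfolding finite_borel_measure_def finite_borel_measure_axioms_def by simp
  qed
  have int: "measure M1 {a<..b} \<le> measure M2 {a<..b}" if ab: "a \<le> b" for a b
  proof -
    define a' where "a' = max a 0"
    define b' where "b' = min b L'"
    have S1: "{0..L'} \<inter> {a<..b} \<subseteq> {a'..b'}" unfolding a'_def b'_def by auto
    have e1: "emeasure M1 {a<..b} \<le> ennreal (if a' \<le> b' then b' - a' else 0)"
    proof -
      have "emeasure M1 {a<..b} = emeasure lborel ({0..L'} \<inter> {a<..b})" by (rule eM1) simp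
      also have "\<dots> \<le> emeasure lborel {a'..b'}" by (rule emeasure_mono[OF S1]) simp
      also have "\<dots> = ennreal (if a' \<le> b' then b' - a' else 0)" by (rule emeasure_lborel_Icc_eq)
      finally show ?thesis .
    qed
    have e2: "ennreal (if a' \<le> b' then b' - a' else 0) \<le> emeasure M2 {a<..b}"
    proof (cases "a' < b'")
      case False then show ?thesis by simp
    next
      case True
      have "\<sigma> 0 \<le> b'" "b' \<le> \<sigma> L" using s0 sL True unfolding a'_def b'_def by auto
      then obtain s2 where s2: "0 \<le> s2" "s2 \<le> L" "\<sigma> s2 = b'"
        using IVT'[of \<sigma> 0 b' L, OF _ _ L contsig] by auto
      have b's2: "b' \<le> s2" using lip[of 0 s2] s2 s0 by simp
      have a'0: "0 \<le> a'" unfolding a'_def by simp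
      have sub: "{s2 - (b' - a')<..s2} \<subseteq> {0..L} \<inter> \<sigma>c -` {a<..b}"
      proof
        fix s assume s: "s \<in> {s2 - (b' - a')<..s2}"
        have s0': "0 \<le> s" using s b's2 a'0 by auto
        have sL': "s \<le> L" using s s2 by auto
        have "\<sigma>c s = \<sigma> s" unfolding \<sigma>c_def using cid s0' sL' by simp
        moreover have "\<sigma> s \<le> b" using mono[of s s2] s s0' s2 unfolding b'_def by auto
        moreover have "a < \<sigma> s"
          using lip[of s s2] s s0' s2 unfolding a'_def by auto
        ultimately show "s \<in> {0..L} \<inter> \<sigma>c -` {a<..b}" using s0' sL' by auto
      qed
      have "ennreal (if a' \<le> b' then b' - a' else 0) = emeasure lborel {s2 - (b' - a')<..s2}"
        using True by (subst emeasure_lborel_Ioc) auto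
      also have "\<dots> \<le> emeasure lborel ({0..L} \<inter> \<sigma>c -` {a<..b})"
        by (rule emeasure_mono[OF sub]) (use measurable_sets_borel[OF measc, of "{a<..b}"] in auto)
      also have "\<dots> = emeasure M2 {a<..b}" by (rule eM2[symmetric]) simp
      finally show ?thesis .
    qed
    have "emeasure M1 {a<..b} \<le> emeasure M2 {a<..b}" using e1 e2 by (rule order_trans)
    moreover have "emeasure M2 {a<..b} < \<infinity>"
      using finite_measure.emeasure_finite[of M2] fb2 unfolding finite_borel_measure_def
      by (simp add: less_top)
    ultimately show ?thesis unfolding measure_def by (metis enn2real_mono infinity_ennreal_def)
  qed
  have le: "M1 \<le> M2" by (rule measure_comparison[OF fb1 fb2 int])
  have gl: "g \<in> borel_measurable lborel" using g by simp
  have "(\<integral>\<^sup>+u\<in>{0..L'}. g u \<partial>lborel) = (\<integral>\<^sup>+u. indicator {0..L'} u * g u \<partial>lborel)"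
    by (simp add: mult.commute)
  also have "\<dots> = integral\<^sup>N M1 g"
    unfolding M1_def by (rule nn_integral_density[symmetric]) (simp_all add: gl g)
  also have "\<dots> \<le> integral\<^sup>N M2 g"
    by (rule nn_integral_mono_measure[OF _ le]) (simp add: sM1 sM2)
  also have "\<dots> = (\<integral>\<^sup>+s. g (\<sigma>c s) \<partial>M0)"
    unfolding M2_def by (rule nn_integral_distr[OF measc0]) (simp add: g)
  also have "\<dots> = (\<integral>\<^sup>+s. indicator {0..L} s * g (\<sigma>c s) \<partial>lborel)"
    unfolding M0_def by (rule nn_integral_density) (use g measc in simp_all)
  also have "\<dots> = (\<integral>\<^sup>+s\<in>{0..L}. g (\<sigma> s) \<partial>lborel)"
    by (rule nn_integral_cong) (auto simp: \<sigma>c_def cid indicator_def)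
  finally show ?thesis .
qed



lemma set_nn_cong:
  "(\<And>x. x \<in> A \<Longrightarrow> f x = g x) \<Longrightarrow> (\<integral>\<^sup>+x\<in>A. f x \<partial>M) = (\<integral>\<^sup>+x\<in>A. g x \<partial>M)"
  by (rule nn_integral_cong) (auto simp: indicator_def)

lemma zeta_lip:
  fixes f :: "'b::metric_space \<Rightarrow> 'a::metric_space" and \<gamma> :: "real \<Rightarrow> 'b"
  assumes cont: "continuous_on {0..1} \<gamma>" and lenL: "len \<gamma> = ennreal L" and L0: "L \<ge> 0"
    and flip: "1-lipschitz_on UNIV f"
  shows "L-lipschitz_on {0..1} (\<lambda>t. f (arclength_param \<gamma> (L * t)))"
  unfolding lipschitz_on_def
proof (intro conjI ballI)
  fix x y :: real assume x: "x \<in> {0..1}" and y: "y \<in> {0..1}"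
  have Lx: "L * x \<in> {0..L}" "L * y \<in> {0..L}" using x y L0 by (auto simp: mult_left_le)
  have "dist (f (arclength_param \<gamma> (L * x))) (f (arclength_param \<gamma> (L * y)))
        \<le> dist (arclength_param \<gamma> (L * x)) (arclength_param \<gamma> (L * y))"
    using flip unfolding lipschitz_on_def by simp
  also have "\<dots> \<le> 1 * dist (L * x) (L * y)"
    using arc_lip[OF cont lenL] Lx unfolding lipschitz_on_def by blast
  also have "\<dots> = L * dist x y" using L0 by (simp add: dist_real_def abs_mult flip: right_diff_distrib)
  finally show "dist (f (arclength_param \<gamma> (L * x))) (f (arclength_param \<gamma> (L * y))) \<le> L * dist x y" .
qed (rule L0)

lemma zeta_line_integral:
  fixes f :: "'b::metric_space \<Rightarrow> 'a::metric_space" and \<gamma> :: "real \<Rightarrow> 'b" and \<rho> :: "'a \<Rightarrow> ennreal"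
  assumes cont: "continuous_on {0..1} \<gamma>" and lenL: "len \<gamma> = ennreal L" and L0: "L \<ge> 0"
    and flip: "1-lipschitz_on UNIV f" and rho: "\<rho> \<in> borel_measurable borel"
  shows "line_integral \<rho> (\<lambda>t. f (arclength_param \<gamma> (L * t))) \<le> line_integral (\<lambda>x. \<rho> (f x)) \<gamma>"
proof -
  define \<zeta> where "\<zeta> t = f (arclength_param \<gamma> (L * t))" for t
  have zlip: "L-lipschitz_on {0..1} \<zeta>" unfolding \<zeta>_def by (rule zeta_lip[OF cont lenL L0 flip])
  have zcont: "continuous_on {0..1} \<zeta>" by (rule lipschitz_on_continuous_on[OF zlip])
  have zlen: "len \<zeta> \<le> ennreal L" unfolding len_def using cl_lip[OF zlip] by simp
  define L' where "L' = enn2real (len \<zeta>)"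
  have zlenL': "len \<zeta> = ennreal L'" unfolding L'_def using zlen
    by (cases "len \<zeta>" rule: ennreal_cases) (auto simp: top_unique)
  have L'0: "L' \<ge> 0" unfolding L'_def by simp
  have L'L: "L' \<le> L" using zlen zlenL' L0 by (simp add: ennreal_le_iff)
  have zfin: "curve_length \<zeta> 0 1 < \<infinity>" using zlenL' by (simp add: len_def)
  have lhs: "line_integral \<rho> \<zeta> = (\<integral>\<^sup>+u\<in>{0..L'}. \<rho> (arclength_param \<zeta> u) \<partial>lborel)"
    unfolding line_integral_def L'_def ..
  have rhs: "line_integral (\<lambda>x. \<rho> (f x)) \<gamma> = (\<integral>\<^sup>+s\<in>{0..L}. \<rho> (f (arclength_param \<gamma> s)) \<partial>lborel)"
    unfolding line_integral_def lenL using L0 by simp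
  show ?thesis
  proof (cases "L = 0")
    case True
    then have L'z: "L' = 0" using L'L L'0 by simp
    have "line_integral \<rho> \<zeta> = (\<integral>\<^sup>+s\<in>{0..L}. \<rho> (f (arclength_param \<gamma> s)) \<partial>lborel)"
      unfolding lhs L'z True
    proof (rule set_nn_cong)
      fix x :: real assume "x \<in> {0..0}"
      then have x: "x = 0" by simp
      have "arclength_param \<zeta> 0 = \<zeta> 0" by (rule arc_0[OF zcont zlenL' L'0, unfolded L'z])
      then show "\<rho> (arclength_param \<zeta> x) = \<rho> (f (arclength_param \<gamma> x))"
        unfolding x \<zeta>_def by simp
    qed
    then show ?thesis unfolding \<zeta>_def[symmetric] rhs by simp
  next
    case False
    then have Lp: "L > 0" using L0 by simp
    define \<sigma> where "\<sigma> s = enn2real (curve_length \<zeta> 0 (s / L))" for s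
    have sadd: "\<sigma> b = \<sigma> a + enn2real (curve_length \<zeta> (a / L) (b / L))"
      if ab: "0 \<le> a" "a \<le> b" "b \<le> L" for a b
    proof -
      have "0 \<le> a / L" "a / L \<le> b / L" "b / L \<le> 1" using ab Lp by (auto simp: divide_right_mono)
      then show ?thesis unfolding \<sigma>_def by (rule cl_enn2real_add[OF zfin])
    qed
    have s0: "\<sigma> 0 = 0" unfolding \<sigma>_def by (simp add: cl_refl)
    have sL: "\<sigma> L = L'" unfolding \<sigma>_def L'_def len_def using Lp by simp
    have smono: "\<sigma> a \<le> \<sigma> b" if "0 \<le> a" "a \<le> b" "b \<le> L" for a b
      using sadd[OF that] by simp
    have slip: "\<sigma> b - \<sigma> a \<le> b - a" if ab: "0 \<le> a" "a \<le> b" "b \<le> L" for a b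
    proof -
      have sub: "{a / L..b / L} \<subseteq> {0..1}" using ab Lp by (auto simp: divide_right_mono)
      have "L-lipschitz_on {a/L..b/L} \<zeta>" by (rule lipschitz_on_subset[OF zlip sub])
      then have "curve_length \<zeta> (a / L) (b / L) \<le> ennreal (L * (b / L - a / L))"
        by (rule cl_lip) (use ab Lp in \<open>simp add: divide_right_mono\<close>)
      also have "L * (b / L - a / L) = b - a" using Lp by (simp add: field_simps)
      finally have "enn2real (curve_length \<zeta> (a / L) (b / L)) \<le> b - a"
        using ab by (cases "curve_length \<zeta> (a / L) (b / L)" rule: ennreal_cases) (auto simp: ennreal_le_iff)
      then show ?thesis using sadd[OF ab] by simp
    qed
    have sig_range: "\<sigma> s \<in> {0..L'}" if s: "s \<in> {0..L}" for s
      using smono[of 0 s] smono[of s L] s s0 sL by auto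
    have arc_sig: "arclength_param \<zeta> (\<sigma> s) = f (arclength_param \<gamma> s)" if s: "s \<in> {0..L}" for s
    proof -
      have sL1: "s / L \<in> {0..1}" using s Lp by auto
      obtain t where t: "t \<in> {0..1}" "curve_length \<zeta> 0 t = ennreal (\<sigma> s)" "arclength_param \<zeta> (\<sigma> s) = \<zeta> t"
        using arc_param[OF zcont zlenL', of "\<sigma> s"] sig_range[OF s] by auto
      have fin: "curve_length \<zeta> 0 (s / L) < \<infinity>" using cl_fin_sub[OF zfin, of 0 "s/L"] sL1 by simp
      have "curve_length \<zeta> 0 t = curve_length \<zeta> 0 (s / L)"
        unfolding t(2) \<sigma>_def using fin by (cases "curve_length \<zeta> 0 (s / L)" rule: ennreal_cases) auto
      then have "\<zeta> t = \<zeta> (s / L)" by (rule same_point[OF zfin t(1) sL1])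
      then show ?thesis using t(3) Lp unfolding \<zeta>_def by simp
    qed
    define g where "g u = \<rho> (arclength_param \<zeta> (max 0 (min L' u)))" for u
    have gmeas: "g \<in> borel_measurable borel"
    proof -
      have "1-lipschitz_on {0..L'} (arclength_param \<zeta>)" by (rule arc_lip[OF zcont zlenL'])
      then have c1: "continuous_on {0..L'} (arclength_param \<zeta>)" by (rule lipschitz_on_continuous_on)
      have c2: "continuous_on UNIV (\<lambda>u::real. max 0 (min L' u))" by (intro continuous_intros)
      have "continuous_on UNIV (\<lambda>u. arclength_param \<zeta> (max 0 (min L' u)))"
        by (rule continuous_on_compose2[OF c1 c2]) (use L'0 in auto)
      then have "(\<lambda>u. arclength_param \<zeta> (max 0 (min L' u))) \<in> borel_measurable borel"
        by (rule borel_measurable_continuous_onI)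
      then show ?thesis unfolding g_def using rho by (rule measurable_compose)
    qed
    have "(\<integral>\<^sup>+u\<in>{0..L'}. g u \<partial>lborel) \<le> (\<integral>\<^sup>+s\<in>{0..L}. g (\<sigma> s) \<partial>lborel)"
      by (rule E_ineq[OF L0 gmeas s0 sL smono slip])
    moreover have "(\<integral>\<^sup>+u\<in>{0..L'}. g u \<partial>lborel) = line_integral \<rho> \<zeta>"
      unfolding lhs by (rule set_nn_cong) (simp add: g_def)
    moreover have "(\<integral>\<^sup>+s\<in>{0..L}. g (\<sigma> s) \<partial>lborel) = line_integral (\<lambda>x. \<rho> (f x)) \<gamma>"
      unfolding rhs
    proof (rule set_nn_cong)
      fix s assume s: "s \<in> {0..L}"
      have "max 0 (min L' (\<sigma> s)) = \<sigma> s" using sig_range[OF s] by simp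
      then show "g (\<sigma> s) = \<rho> (f (arclength_param \<gamma> s))" unfolding g_def using arc_sig[OF s] by simp
    qed
    ultimately show ?thesis unfolding \<zeta>_def by simp
  qed
qed



lemma enn_powr_meas: "(\<lambda>x. enn_powr x q) \<in> borel_measurable borel"
  unfolding enn_powr_def by measurable

lemma mms_space: "mms M \<Longrightarrow> space M = UNIV"
  unfolding mms_def by simp

lemma mms_borel: "mms M \<Longrightarrow> sets borel \<subseteq> sets M"
  unfolding mms_def by simp

lemma borel_to_mms:
  fixes \<rho> :: "'a::metric_space \<Rightarrow> ennreal"
  assumes "mms M" "\<rho> \<in> borel_measurable borel"
  shows "\<rho> \<in> borel_measurable M"
proof -
  have "borel \<rightarrow>\<^sub>M borel \<subseteq> M \<rightarrow>\<^sub>M (borel :: ennreal measure)"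
    by (rule measurable_mono) (use mms_borel[OF assms(1)] mms_space[OF assms(1)] in auto)
  then show ?thesis using assms(2) by auto
qed

lemma vp_measurable:
  assumes mY: "mms \<mu>Y" and mX: "mms \<mu>" and vp: "volume_preserving \<mu>Y \<mu> f"
  shows "f \<in> \<mu>Y \<rightarrow>\<^sub>M \<mu>"
  unfolding measurable_def using vp mms_space[OF mY] mms_space[OF mX]
  unfolding volume_preserving_def by auto

lemma vp_distr:
  assumes mY: "mms \<mu>Y" and mX: "mms \<mu>" and vp: "volume_preserving \<mu>Y \<mu> f"
  shows "distr \<mu>Y \<mu> f = \<mu>"
proof (rule measure_eqI)
  show "sets (distr \<mu>Y \<mu> f) = sets \<mu>" by simp
  fix A assume "A \<in> sets (distr \<mu>Y \<mu> f)"
  then have A: "A \<in> sets \<mu>" by simp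
  have "emeasure (distr \<mu>Y \<mu> f) A = emeasure \<mu>Y (f -` A \<inter> space \<mu>Y)"
    by (rule emeasure_distr[OF vp_measurable[OF mY mX vp] A])
  also have "\<dots> = emeasure \<mu> A" using vp A mms_space[OF mY] unfolding volume_preserving_def by simp
  finally show "emeasure (distr \<mu>Y \<mu> f) A = emeasure \<mu> A" .
qed

lemma mod_transfer:
  fixes \<mu> :: "'a::metric_space measure" and \<mu>Y :: "'b::metric_space measure" and f :: "'b \<Rightarrow> 'a"
  assumes mY: "mms \<mu>Y" and mX: "mms \<mu>" and vp: "volume_preserving \<mu>Y \<mu> f"
    and adm: "\<And>\<rho>. admissible \<Gamma>0 \<rho> \<Longrightarrow> admissible \<Gamma>1 (\<lambda>y. \<rho> (f y))"
  shows "Mod \<mu>Y p \<Gamma>1 \<le> Mod \<mu> p \<Gamma>0"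
proof -
  have fm: "f \<in> \<mu>Y \<rightarrow>\<^sub>M \<mu>" by (rule vp_measurable[OF mY mX vp])
  have cost1: "(\<integral>\<^sup>+ y. enn_powr (\<rho> (f y)) q \<partial>\<mu>Y) = (\<integral>\<^sup>+ x. enn_powr (\<rho> x) q \<partial>\<mu>)"
    if rho: "\<rho> \<in> borel_measurable borel" for \<rho> :: "'a \<Rightarrow> ennreal" and q
  proof -
    have rm: "\<rho> \<in> borel_measurable \<mu>" by (rule borel_to_mms[OF mX rho])
    have hm: "(\<lambda>x. enn_powr (\<rho> x) q) \<in> borel_measurable \<mu>"
      using measurable_compose[OF rm enn_powr_meas] by simp
    have "(\<integral>\<^sup>+ x. enn_powr (\<rho> x) q \<partial>\<mu>) = (\<integral>\<^sup>+ x. enn_powr (\<rho> x) q \<partial>distr \<mu>Y \<mu> f)"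
      using vp_distr[OF mY mX vp] by simp
    also have "\<dots> = (\<integral>\<^sup>+ y. enn_powr (\<rho> (f y)) q \<partial>\<mu>Y)"
      by (rule nn_integral_distr[OF fm]) (simp add: hm)
    finally show ?thesis by simp
  qed
  have cost2: "esssup \<mu>Y (\<lambda>y. \<rho> (f y)) = esssup \<mu> \<rho>"
    if rho: "\<rho> \<in> borel_measurable borel" for \<rho> :: "'a \<Rightarrow> ennreal"
  proof -
    have rm: "\<rho> \<in> borel_measurable \<mu>" by (rule borel_to_mms[OF mX rho])
    have rfm: "(\<lambda>y. \<rho> (f y)) \<in> borel_measurable \<mu>Y" using measurable_compose[OF fm rm] by simp
    have "emeasure \<mu>Y {y \<in> space \<mu>Y. z < \<rho> (f y)} = emeasure \<mu> {x \<in> space \<mu>. z < \<rho> x}" for z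
    proof -
      have S: "{x \<in> space \<mu>. z < \<rho> x} \<in> sets \<mu>" using rm by measurable
      have "{y \<in> space \<mu>Y. z < \<rho> (f y)} = f -` {x \<in> space \<mu>. z < \<rho> x}"
        using mms_space[OF mY] mms_space[OF mX] by auto
      moreover have "emeasure \<mu>Y (f -` {x \<in> space \<mu>. z < \<rho> x}) = emeasure \<mu> {x \<in> space \<mu>. z < \<rho> x}"
        using vp S unfolding volume_preserving_def by blast
      ultimately show ?thesis by simp
    qed
    then show ?thesis using esssup_eq[OF rm] esssup_eq[OF rfm] by simp
  qed
  show ?thesis
  proof (cases "p = \<infinity>")
    case True
    have e1: "Mod \<mu>Y p \<Gamma>1 = (INF \<rho> \<in> {\<rho>. admissible \<Gamma>1 \<rho>}. esssup \<mu>Y \<rho>)"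
      unfolding Mod_def using True by simp
    have e2: "Mod \<mu> p \<Gamma>0 = (INF \<rho> \<in> {\<rho>. admissible \<Gamma>0 \<rho>}. esssup \<mu> \<rho>)"
      unfolding Mod_def using True by simp
    show ?thesis unfolding e1 e2
    proof (rule INF_mono)
      fix \<rho> assume "\<rho> \<in> {\<rho>. admissible \<Gamma>0 \<rho>}"
      then have a: "admissible \<Gamma>0 \<rho>" by simp
      then have "\<rho> \<in> borel_measurable borel" unfolding admissible_def by simp
      then show "\<exists>\<rho>'\<in>{\<rho>. admissible \<Gamma>1 \<rho>}. esssup \<mu>Y \<rho>' \<le> esssup \<mu> \<rho>"
        using adm[OF a] cost2 by (intro bexI[of _ "\<lambda>y. \<rho> (f y)"]) auto
    qed
  next
    case False
    have e1: "Mod \<mu>Y p \<Gamma>1 = (INF \<rho> \<in> {\<rho>. admissible \<Gamma>1 \<rho>}. \<integral>\<^sup>+ x. enn_powr (\<rho> x) (enn2real p) \<partial>\<mu>Y)"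
      unfolding Mod_def using False by simp
    have e2: "Mod \<mu> p \<Gamma>0 = (INF \<rho> \<in> {\<rho>. admissible \<Gamma>0 \<rho>}. \<integral>\<^sup>+ x. enn_powr (\<rho> x) (enn2real p) \<partial>\<mu>)"
      unfolding Mod_def using False by simp
    show ?thesis unfolding e1 e2
    proof (rule INF_mono)
      fix \<rho> assume "\<rho> \<in> {\<rho>. admissible \<Gamma>0 \<rho>}"
      then have a: "admissible \<Gamma>0 \<rho>" by simp
      then have "\<rho> \<in> borel_measurable borel" unfolding admissible_def by simp
      then show "\<exists>\<rho>'\<in>{\<rho>. admissible \<Gamma>1 \<rho>}. (\<integral>\<^sup>+ x. enn_powr (\<rho>' x) (enn2real p) \<partial>\<mu>Y) \<le> (\<integral>\<^sup>+ x. enn_powr (\<rho> x) (enn2real p) \<partial>\<mu>)"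
        using adm[OF a] cost1 by (intro bexI[of _ "\<lambda>y. \<rho> (f y)"]) auto
    qed
  qed
qed



lemma ess_bound:
  fixes \<mu> :: "'a::metric_space measure" and \<mu>Y :: "'b::metric_space measure" and f :: "'b \<Rightarrow> 'a"
  assumes mY: "mms \<mu>Y" and mX: "mms \<mu>" and vp: "volume_preserving \<mu>Y \<mu> f"
    and flip: "1-lipschitz_on UNIV f" and thick: "thick_quasiconvex \<mu>Y p K" and K: "K \<ge> 0"
    and d: "\<delta> > 0"
  shows "ess_length \<mu> p (curves_between (cball (f y) \<delta>) (cball (f y') \<delta>)) \<le> ennreal (K * (dist y y' + 2 * \<delta>))"
  unfolding ess_length_def
proof (rule SUP_least)
  define B where "B = K * (dist y y' + 2 * \<delta>)"
  define \<Gamma> where "\<Gamma> = curves_between (cball (f y) \<delta>) (cball (f y') \<delta>)"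
  fix \<Gamma>0 assume "\<Gamma>0 \<in> {\<Gamma>0. Mod \<mu> p \<Gamma>0 = 0}"
  then have M0: "Mod \<mu> p \<Gamma>0 = 0" by simp
  show "(INF \<gamma>\<in>curves_between (cball (f y) \<delta>) (cball (f y') \<delta>) - \<Gamma>0. len \<gamma>) \<le> ennreal (K * (dist y y' + 2 * \<delta>))"
  proof (rule ccontr)
    assume nle: "\<not> ?thesis"
    have big: "\<zeta> \<in> \<Gamma>0" if "\<zeta> \<in> \<Gamma>" "len \<zeta> \<le> ennreal B" for \<zeta>
    proof (rule ccontr)
      assume "\<zeta> \<notin> \<Gamma>0"
      then have "(INF \<gamma>\<in>\<Gamma> - \<Gamma>0. len \<gamma>) \<le> ennreal B" using that by (intro INF_lower2[of \<zeta>]) auto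
      then show False using nle unfolding B_def \<Gamma>_def by simp
    qed
    define \<Gamma>1 where "\<Gamma>1 = curves_qc (ball y \<delta>) (ball y' \<delta>) K"
    have fcont: "continuous_on UNIV f" by (rule lipschitz_on_continuous_on[OF flip])
    have fmeas: "f \<in> borel_measurable borel" by (rule borel_measurable_continuous_onI[OF fcont])
    have adm: "admissible \<Gamma>1 (\<lambda>x. \<rho> (f x))" if a: "admissible \<Gamma>0 \<rho>" for \<rho>
      unfolding admissible_def
    proof (intro conjI ballI)
      have rho: "\<rho> \<in> borel_measurable borel" using a unfolding admissible_def by simp
      show "(\<lambda>x. \<rho> (f x)) \<in> borel_measurable borel" using measurable_compose[OF fmeas rho] by simp
      fix \<gamma> assume "\<gamma> \<in> \<Gamma>1"
      then have g: "continuous_on {0..1} \<gamma>" "\<gamma> 0 \<in> ball y \<delta>" "\<gamma> 1 \<in> ball y' \<delta>"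
        "len \<gamma> \<le> ennreal (K * dist (\<gamma> 0) (\<gamma> 1))"
        unfolding \<Gamma>1_def curves_qc_def by auto
      define L where "L = enn2real (len \<gamma>)"
      have lenL: "len \<gamma> = ennreal L" unfolding L_def using g(4)
        by (cases "len \<gamma>" rule: ennreal_cases) (auto simp: top_unique)
      have L0: "L \<ge> 0" unfolding L_def by simp
      define \<zeta> where "\<zeta> t = f (arclength_param \<gamma> (L * t))" for t
      have zlip: "L-lipschitz_on {0..1} \<zeta>" unfolding \<zeta>_def by (rule zeta_lip[OF g(1) lenL L0 flip])
      have z0: "\<zeta> 0 = f (\<gamma> 0)" unfolding \<zeta>_def using arc_0[OF g(1) lenL L0] by simp
      have z1: "\<zeta> 1 = f (\<gamma> 1)" unfolding \<zeta>_def using arc_L[OF g(1) lenL L0] by simp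
      have "dist (f y) (f (\<gamma> 0)) \<le> dist y (\<gamma> 0)" using flip unfolding lipschitz_on_def by simp
      then have zin0: "\<zeta> 0 \<in> cball (f y) \<delta>" using g(2) z0 by (simp add: dist_commute)
      have "dist (f y') (f (\<gamma> 1)) \<le> dist y' (\<gamma> 1)" using flip unfolding lipschitz_on_def by simp
      then have zin1: "\<zeta> 1 \<in> cball (f y') \<delta>" using g(3) z1 by (simp add: dist_commute)
      have "\<zeta> \<in> lip_curves" unfolding lip_curves_def using zlip by blast
      then have zG: "\<zeta> \<in> \<Gamma>" unfolding \<Gamma>_def curves_between_def using zin0 zin1 by blast
      have zlen: "len \<zeta> \<le> ennreal L" unfolding len_def using cl_lip[OF zlip] by simp
      have t1: "dist (\<gamma> 0) (\<gamma> 1) \<le> dist (\<gamma> 0) y + dist y (\<gamma> 1)" by (rule dist_triangle)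
      have t2: "dist y (\<gamma> 1) \<le> dist y y' + dist y' (\<gamma> 1)" by (rule dist_triangle)
      have t3: "dist (\<gamma> 0) y < \<delta>" "dist y' (\<gamma> 1) < \<delta>" using g(2) g(3) by (auto simp: dist_commute)
      have "dist (\<gamma> 0) (\<gamma> 1) \<le> dist y y' + 2 * \<delta>" using t1 t2 t3 by linarith
      then have "K * dist (\<gamma> 0) (\<gamma> 1) \<le> B" unfolding B_def using K by (rule mult_left_mono)
      then have "ennreal (K * dist (\<gamma> 0) (\<gamma> 1)) \<le> ennreal B" by (rule ennreal_leI)
      then have "len \<zeta> \<le> ennreal B" using zlen g(4) unfolding lenL[symmetric] by (meson order.trans)
      then have "\<zeta> \<in> \<Gamma>0" by (rule big[OF zG])
      then have "1 \<le> line_integral \<rho> \<zeta>" using a unfolding admissible_def by simp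
      also have "\<dots> \<le> line_integral (\<lambda>x. \<rho> (f x)) \<gamma>"
        unfolding \<zeta>_def by (rule zeta_line_integral[OF g(1) lenL L0 flip rho])
      finally show "1 \<le> line_integral (\<lambda>x. \<rho> (f x)) \<gamma>" .
    qed
    have "Mod \<mu>Y p \<Gamma>1 \<le> Mod \<mu> p \<Gamma>0" by (rule mod_transfer[OF mY mX vp adm])
    then have "Mod \<mu>Y p \<Gamma>1 = 0" using M0 by simp
    moreover have "Mod \<mu>Y p \<Gamma>1 > 0"
    proof -
      have "ball y \<delta> \<in> sets \<mu>Y" "ball y' \<delta> \<in> sets \<mu>Y" using mms_borel[OF mY] by auto
      moreover have "emeasure \<mu>Y (ball y \<delta>) > 0" "emeasure \<mu>Y (ball y' \<delta>) > 0"
        using mY d unfolding mms_def by auto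
      ultimately show ?thesis using thick unfolding thick_quasiconvex_def \<Gamma>1_def by blast
    qed
    ultimately show False by simp
  qed
qed



lemma dp'_bound:
  fixes \<mu> :: "'a::metric_space measure" and \<mu>Y :: "'b::metric_space measure" and f :: "'b \<Rightarrow> 'a"
  assumes mY: "mms \<mu>Y" and mX: "mms \<mu>" and vp: "volume_preserving \<mu>Y \<mu> f"
    and flip: "1-lipschitz_on UNIV f" and thick: "thick_quasiconvex \<mu>Y p K" and K: "K \<ge> 0"
  shows "dp' \<mu> p (f y) (f y') \<le> ennreal (K * dist y y')"
proof -
  define h where "h \<delta> = ess_length \<mu> p (curves_between (cball (f y) \<delta>) (cball (f y') \<delta>))" for \<delta>
  have anti: "h \<delta>2 \<le> h \<delta>1" if "\<delta>1 \<le> \<delta>2" for \<delta>1 \<delta>2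
  proof -
    have sub: "curves_between (cball (f y) \<delta>1) (cball (f y') \<delta>1) \<subseteq> curves_between (cball (f y) \<delta>2) (cball (f y') \<delta>2)"
      unfolding curves_between_def using that by auto
    show ?thesis unfolding h_def ess_length_def
      by (rule SUP_mono) (use sub in \<open>auto intro!: INF_superset_mono\<close>)
  qed
  define S where "S = (SUP \<delta>\<in>{0<..}. h \<delta>)"
  have lim: "(h \<longlongrightarrow> S) (at_right 0)"
  proof (rule increasing_tendsto)
    show "\<forall>\<^sub>F n in at_right 0. h n \<le> S"
      unfolding eventually_at_right_field S_def by (intro exI[of _ 1]) (auto intro: SUP_upper)
  next
    fix x assume "x < S"
    then obtain \<delta>0 where d0: "\<delta>0 > 0" "x < h \<delta>0" unfolding S_def by (auto simp: less_SUP_iff)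
    show "\<forall>\<^sub>F n in at_right 0. x < h n"
      unfolding eventually_at_right_field
      by (intro exI[of _ \<delta>0]) (use d0 anti in \<open>auto intro: less_le_trans\<close>)
  qed
  have dpS: "dp' \<mu> p (f y) (f y') = S"
    unfolding dp'_def h_def[symmetric] by (rule tendsto_Lim[OF trivial_limit_at_right_real lim])
  have "S \<le> ennreal (K * dist y y')"
    unfolding S_def
  proof (rule SUP_least)
    fix \<delta>0 :: real assume "\<delta>0 \<in> {0<..}"
    then have d0: "\<delta>0 > 0" by simp
    have t1: "((\<lambda>\<delta>. ennreal (K * (dist y y' + 2 * \<delta>))) \<longlongrightarrow> ennreal (K * (dist y y' + 2 * 0))) (at_right 0)"
      by (intro tendsto_ennrealI tendsto_intros)
    have t2: "((\<lambda>\<delta>. h \<delta>0) \<longlongrightarrow> h \<delta>0) (at_right 0)" by simp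
    have ev: "\<forall>\<^sub>F \<delta> in at_right 0. h \<delta>0 \<le> ennreal (K * (dist y y' + 2 * \<delta>))"
      unfolding eventually_at_right_field
    proof (intro exI[of _ \<delta>0] conjI allI impI)
      fix \<delta> :: real assume "0 < \<delta>" "\<delta> < \<delta>0"
      then have a1: "h \<delta>0 \<le> h \<delta>" and dpos: "0 < \<delta>" using anti by auto
      have a2: "h \<delta> \<le> ennreal (K * (dist y y' + 2 * \<delta>))"
        unfolding h_def by (rule ess_bound[OF mY mX vp flip thick K dpos])
      show "h \<delta>0 \<le> ennreal (K * (dist y y' + 2 * \<delta>))" by (rule order_trans[OF a1 a2])
    qed (use d0 in simp)
    have "h \<delta>0 \<le> ennreal (K * (dist y y' + 2 * 0))"
      by (rule tendsto_le[OF trivial_limit_at_right_real t1 t2 ev])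
    then show "h \<delta>0 \<le> ennreal (K * dist y y')" by simp
  qed
  then show ?thesis using dpS by simp
qed

lemma dp_le_dp': "dp M p x y \<le> dp' M p x y"
proof -
  let ?xs = "\<lambda>i::nat. if i = 0 then x else y"
  have "(1::nat, ?xs) \<in> {(n, xs). n \<ge> 1 \<and> xs 0 = x \<and> xs n = y}" by simp
  moreover have "(\<Sum>i\<in>{1..1::nat}. dp' M p (?xs (i - 1)) (?xs i)) = dp' M p x y" by simp
  ultimately show ?thesis unfolding dp_def
    by (intro INF_lower2[of "(1::nat, ?xs)"]) auto
qed

theorem proposition5p9:
  fixes \<mu> :: "'a::metric_space measure" and \<mu>Y :: "'b::metric_space measure"
    and p :: ennreal and C :: real and f :: "'b \<Rightarrow> 'a"
  assumes "1 \<le> p"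
    and "mms \<mu>" and "C \<ge> 1" and "thick_quasiconvex \<mu> p C"
    and "mms \<mu>Y" and "thick_geodesic \<mu>Y p"
    and "volume_preserving \<mu>Y \<mu> f" and "1-lipschitz_on UNIV f"
  shows "dist_borel_sets (dp \<mu> p) \<subseteq> sets \<mu>
       \<and> (\<forall>A \<in> dist_borel_sets (dp \<mu> p). f -` A \<in> sets \<mu>Y \<and> emeasure \<mu>Y (f -` A) = emeasure \<mu> A)
       \<and> (\<forall>y y'. dp \<mu> p (f y) (f y') \<le> ennreal (dist y y'))"
proof -
  note mX = assms(2) and mY = assms(5) and vp = assms(7) and flip = assms(8)
  have vpid: "volume_preserving \<mu> \<mu> (\<lambda>x. x)" unfolding volume_preserving_def by simp
  have lipid: "1-lipschitz_on UNIV (\<lambda>x::'a. x)" unfolding lipschitz_on_def by simp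
  have C0: "C \<ge> 0" using assms(3) by simp
  have Xb: "dp \<mu> p x x' \<le> ennreal (C * dist x x')" for x x'
    using dp_le_dp'[of \<mu> p x x'] dp'_bound[OF mX mX vpid lipid assms(4) C0, of x x'] by simp
  have op: "open U" if dop: "dist_open (dp \<mu> p) U" for U
    unfolding open_dist
  proof (intro ballI)
    fix x assume x: "x \<in> U"
    then obtain r where r: "r > 0" "{y. dp \<mu> p x y < ennreal r} \<subseteq> U"
      using dop x unfolding dist_open_def by blast
    show "\<exists>e>0. \<forall>y. dist y x < e \<longrightarrow> y \<in> U"
    proof (intro exI[of _ "r / C"] conjI allI impI)
      show "r / C > 0" using r assms(3) by simp
      fix y assume "dist y x < r / C"
      then have "C * dist x y < r" using assms(3) by (simp add: dist_commute field_simps)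
      then have "ennreal (C * dist x y) < ennreal r" using r by (intro ennreal_lessI) auto
      then have "dp \<mu> p x y < ennreal r" using Xb[of x y] by (rule le_less_trans[rotated])
      then show "y \<in> U" using r by blast
    qed
  qed
  have P1: "dist_borel_sets (dp \<mu> p) \<subseteq> sets \<mu>"
  proof -
    have "{U. dist_open (dp \<mu> p) U} \<subseteq> sets \<mu>" using op mms_borel[OF mX] by auto
    then have "sigma_sets (space \<mu>) {U. dist_open (dp \<mu> p) U} \<subseteq> sets \<mu>" by (rule sets.sigma_sets_subset)
    then show ?thesis unfolding dist_borel_sets_def using mms_space[OF mX] by simp
  qed
  have P2: "\<forall>A \<in> dist_borel_sets (dp \<mu> p). f -` A \<in> sets \<mu>Y \<and> emeasure \<mu>Y (f -` A) = emeasure \<mu> A"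
    using P1 vp unfolding volume_preserving_def by blast
  have P3: "dp \<mu> p (f y) (f y') \<le> ennreal (dist y y')" for y y'
  proof -
    have b: "dp \<mu> p (f y) (f y') \<le> ennreal (K * dist y y')" if K: "K > 1" for K
    proof -
      have "thick_quasiconvex \<mu>Y p K" using assms(6) K unfolding thick_geodesic_def by simp
      moreover have "K \<ge> 0" using K by simp
      ultimately have "dp' \<mu> p (f y) (f y') \<le> ennreal (K * dist y y')" by (rule dp'_bound[OF mY mX vp flip])
      then show ?thesis using dp_le_dp'[of \<mu> p "f y" "f y'"] by (rule order_trans[rotated])
    qed
    have t1: "((\<lambda>K. ennreal (K * dist y y')) \<longlongrightarrow> ennreal (1 * dist y y')) (at_right 1)"
      by (intro tendsto_ennrealI tendsto_intros)
    have t2: "((\<lambda>K. dp \<mu> p (f y) (f y')) \<longlongrightarrow> dp \<mu> p (f y) (f y')) (at_right 1)" by simp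
    have ev: "\<forall>\<^sub>F K in at_right 1. dp \<mu> p (f y) (f y') \<le> ennreal (K * dist y y')"
      unfolding eventually_at_right_field by (intro exI[of _ 2]) (auto intro: b)
    have "dp \<mu> p (f y) (f y') \<le> ennreal (1 * dist y y')"
      by (rule tendsto_le[OF trivial_limit_at_right_real t1 t2 ev])
    then show ?thesis by simp
  qed
  show ?thesis using P1 P2 P3 by blast
qed

end
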